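(* Let $\Lambda\in P^+$ and let $\beta=\alpha_{j_1}+\dots+\alpha_{j_n}$ with $j_1,\dots,j_n\in I$ pairwise distinct. Let $\mu,\nu\in I^\beta$ with $e(\mu)\ne0$ and $e(\nu)\neq0$ in $R^\Lambda(\beta)$. Then $\mu\sim\nu$, i.e. there is a sequence $\mu^{[0]}=\mu,\mu^{[1]},\dots,\mu^{[k]}=\nu$ of elements of $I^\beta$ such that $e(\mu^{[t-1]})R^\Lambda(\beta)e(\mu^{[t]})\neq0$ for all $1\le t\le k$.
   Context: Fix a field $\mathbf{k}$ of characteristic $\neq 2$. A Cartan superdatum consists of an index set $I$; a symmetrizable generalized Cartan matrix $A=(a_{ij})_{i,j\in I}$ ($a_{ii}=2$, $a_{ij}\le 0$ for $i\ne j$, $a_{ij}=0\iff a_{ji}=0$, positive integers $d_i$ with $d_ia_{ij}=d_ja_{ji}$); a free abelian group $P$; $\mathbb{Z}$-linearly independent $\alpha_i\in P$; $h_i\in\mathrm{Hom}_{\mathbb{Z}}(P,\mathbb{Z})$ with $\langle h_i,\alpha_j\rangle=a_{ij}$; and $I=I_{\mathrm{even}}\sqcup I_{\mathrm{odd}}$ with $a_{ij}\in2\mathbb{Z}$ whenever $i\in I_{\mathrm{odd}}$. A symmetric bilinear form $(\cdot|\cdot)$ on $P$ satisfies $(\alpha_i|\lambda)=d_i\langle h_i,\lambda\rangle$. Parity $\mathrm{p}(i)=1$ if $i\in I_{\mathrm{odd}}$, $0$ otherwise. $P^+=\{\Lambda:\langle h_i,\Lambda\rangle\ge0\ \forall i\}$;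 $I^\beta=\{\nu\in I^n:\sum_s\alpha_{\nu_s}=\beta\}$. For $\nu\in I^n$, $\mathcal{P}_\nu=\mathbf{k}\langle\mathrm{x}_1,\dots,\mathrm{x}_n\rangle/(\mathrm{x}_a\mathrm{x}_b-(-1)^{\mathrm{p}(\nu_a)\mathrm{p}(\nu_b)}\mathrm{x}_b\mathrm{x}_a)$. Fix $Q_{ij}(\mathrm{x}_1,\mathrm{x}_2)=\sum_{r,s}t_{i,j;(r,s)}\mathrm{x}_1^r\mathrm{x}_2^s\in\mathcal{P}_{(i,j)}$ with: $t_{i,j;(r,s)}\ne0$ only if $-2(\alpha_i|\alpha_j)-r(\alpha_i|\alpha_i)-s(\alpha_j|\alpha_j)=0$; $t_{i,j;(r,s)}=t_{j,i;(s,r)}$; $t_{i,j;(-a_{ij},0)}\in\mathbf{k}^\times$; $t_{i,j;(r,s)}=0$ if $i=j$ or ($i\in I_{\mathrm{odd}}$ and $r$ odd). $R(\beta)$ is the $\mathbf{k}$-algebra with generators $e(\nu)$ ($\nu\in I^\beta$), $x_1,\dots,x_n$, $\tau_1,\dots,\tau_{n-1}$ and relations: $e(\mu)e(\nu)=\delta_{\mu\nu}e(\nu)$, $\sum_\nu e(\nu)=1$; $x_px_qe(\nu)=(-1)^{\mathrm{p}(\nu_p)\mathrm{p}(\nu_q)}x_qx_pe(\nu)$ ($p\ne q$); $x_pe(\nu)=e(\nu)x_p$; $\tau_ae(\nu)=e(s_a\nu)\tau_a$; $\tau_ax_pe(\nu)=(-1)^{\mathrm{p}(\nu_p)\mathrm{p}(\nu_a)\mathrm{p}(\nu_{a+1})}x_p\tau_ae(\nu)$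 ($p\ne a,a+1$); $(\tau_ax_{a+1}-(-1)^{\mathrm{p}(\nu_a)\mathrm{p}(\nu_{a+1})}x_a\tau_a)e(\nu)=(x_{a+1}\tau_a-(-1)^{\mathrm{p}(\nu_a)\mathrm{p}(\nu_{a+1})}\tau_ax_a)e(\nu)=\delta_{\nu_a,\nu_{a+1}}e(\nu)$; $\tau_a^2e(\nu)=Q_{\nu_a,\nu_{a+1}}(x_a,x_{a+1})e(\nu)$; $\tau_a\tau_be(\nu)=(-1)^{\mathrm{p}(\nu_a)\mathrm{p}(\nu_{a+1})\mathrm{p}(\nu_b)\mathrm{p}(\nu_{b+1})}\tau_b\tau_ae(\nu)$ ($|a-b|>1$); $(\tau_{a+1}\tau_a\tau_{a+1}-\tau_a\tau_{a+1}\tau_a)e(\nu)$ equals $\frac{Q_{\nu_a,\nu_{a+1}}(x_{a+2},x_{a+1})-Q_{\nu_a,\nu_{a+1}}(x_a,x_{a+1})}{x_{a+2}-x_a}e(\nu)$ if $\nu_a=\nu_{a+2}\in I_{\mathrm{even}}$, $(-1)^{\mathrm{p}(\nu_{a+1})}(x_{a+2}-x_a)\frac{Q_{\nu_a,\nu_{a+1}}(x_{a+2},x_{a+1})-Q_{\nu_a,\nu_{a+1}}(x_a,x_{a+1})}{x_{a+2}^2-x_a^2}e(\nu)$ if $\nu_a=\nu_{a+2}\in I_{\mathrm{odd}}$, $0$ otherwise; $s_a=(a,a+1)$, and $\mathfrak{S}_n$ acts on $I^n$ by $(w\nu)_j=\nu_{w^{-1}(j)}$. For $\Lambda\in P^+$,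 $R^\Lambda(\beta)=R(\beta)/\langle\sum_{\nu}x_1^{\langle h_{\nu_1},\Lambda\rangle}e(\nu)\rangle$. *)

theory Defs
  imports Complex_Main
begin

definition zsc :: "int \<Rightarrow> 'a::ab_group_add \<Rightarrow> 'a" where
  "zsc k x = (if 0 \<le> k then (\<Sum>_\<in>{..<nat k}. x) else - (\<Sum>_\<in>{..<nat (- k)}. x))"

definition zlin_indep :: "'i set \<Rightarrow> ('i \<Rightarrow> 'a::ab_group_add) \<Rightarrow> bool" where
  "zlin_indep I v \<longleftrightarrow> (\<forall>F c. finite F \<longrightarrow> F \<subseteq> I \<longrightarrow>
      (\<Sum>i\<in>F. zsc (c i) (v i)) = 0 \<longrightarrow> (\<forall>i\<in>F. c i = 0))"

definition zfree_basis :: "'a::ab_group_add set \<Rightarrow> bool" where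
  "zfree_basis B \<longleftrightarrow> zlin_indep B id \<and>
     (\<forall>x. \<exists>F c. finite F \<and> F \<subseteq> B \<and> x = (\<Sum>b\<in>F. zsc (c b) b))"

definition Ibeta :: "'i set \<Rightarrow> ('i \<Rightarrow> 'p::comm_monoid_add) \<Rightarrow> 'p \<Rightarrow> 'i list set" where
  "Ibeta I \<alpha> \<beta> = {\<nu>. set \<nu> \<subseteq> I \<and> sum_list (map \<alpha> \<nu>) = \<beta>}"

section \<open>Free associative algebra on generators (0-based indices)\<close>

datatype 'i gen = GE "'i list" | GX nat | GT nat

type_synonym ('i, 'k) fa = "'i gen list \<Rightarrow> 'k"

definition fa_lin :: "('k::field \<times> 'i gen list) list \<Rightarrow> ('i, 'k) fa" where
  "fa_lin xs = (\<lambda>w. sum_list (map (\<lambda>(c, u). if u = w then c else 0) xs))"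

definition fa_mult :: "('i, 'k::field) fa \<Rightarrow> ('i, 'k) fa \<Rightarrow> ('i, 'k) fa" where
  "fa_mult f g = (\<lambda>w. \<Sum>i\<le>length w. f (take i w) * g (drop i w))"

definition valid_gen :: "'i list set \<Rightarrow> nat \<Rightarrow> 'i gen \<Rightarrow> bool" where
  "valid_gen Ib n g = (case g of GE \<nu> \<Rightarrow> \<nu> \<in> Ib | GX p \<Rightarrow> p < n | GT a \<Rightarrow> Suc a < n)"

text \<open>Elements of the free algebra on the generators e(nu) (nu in I^beta), x_p, tau_a.\<close>
definition fa_elem :: "'i list set \<Rightarrow> nat \<Rightarrow> ('i, 'k::field) fa \<Rightarrow> bool" where
  "fa_elem Ib n f \<longleftrightarrow> finite {w. f w \<noteq> 0} \<and>
     (\<forall>w. f w \<noteq> 0 \<longrightarrow> (\<forall>g\<in>set w. valid_gen Ib n g))"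

text \<open>Two-sided ideal generated by S, multipliers ranging over the algebra M.\<close>
inductive in_ideal :: "(('i, 'k::field) fa \<Rightarrow> bool) \<Rightarrow> ('i, 'k) fa set \<Rightarrow> ('i, 'k) fa \<Rightarrow> bool"
  for M S where
  gen: "s \<in> S \<Longrightarrow> in_ideal M S s"
| zero: "in_ideal M S (\<lambda>_. 0)"
| add: "in_ideal M S f \<Longrightarrow> in_ideal M S g \<Longrightarrow> in_ideal M S (\<lambda>w. f w + g w)"
| smult: "in_ideal M S f \<Longrightarrow> in_ideal M S (\<lambda>w. c * f w)"
| lmult: "M a \<Longrightarrow> in_ideal M S f \<Longrightarrow> in_ideal M S (fa_mult a f)"
| rmult: "M a \<Longrightarrow> in_ideal M S f \<Longrightarrow> in_ideal M S (fa_mult f a)"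

definition sg :: "bool \<Rightarrow> 'k::field" where
  "sg b = (if b then - 1 else 1)"

definition swp :: "nat \<Rightarrow> 'i list \<Rightarrow> 'i list" where
  "swp a \<nu> = \<nu>[a := \<nu> ! Suc a, Suc a := \<nu> ! a]"

definition Qel :: "('i \<Rightarrow> 'i \<Rightarrow> nat \<Rightarrow> nat \<Rightarrow> 'k::field) \<Rightarrow> 'i \<Rightarrow> 'i \<Rightarrow> nat \<Rightarrow> nat \<Rightarrow> 'i list \<Rightarrow> ('i, 'k) fa" where
  "Qel t i j a b \<nu> = (\<lambda>w. \<Sum>r\<le>length w. \<Sum>s\<le>length w.
      if w = replicate r (GX a) @ replicate s (GX b) @ [GE \<nu>] then t i j r s else 0)"

text \<open>(Q_{ij}(x_{a+2},x_{a+1}) - Q_{ij}(x_a,x_{a+1}))/(x_{a+2}-x_a) e(nu), written out.\<close>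
definition Beven :: "('i \<Rightarrow> 'i \<Rightarrow> nat \<Rightarrow> nat \<Rightarrow> 'k::field) \<Rightarrow> 'i \<Rightarrow> 'i \<Rightarrow> nat \<Rightarrow> 'i list \<Rightarrow> ('i, 'k) fa" where
  "Beven t i j a \<nu> = (\<lambda>w. \<Sum>r\<le>length w + 2. \<Sum>s\<le>length w + 2. \<Sum>k<r.
      if w = replicate k (GX (a+2)) @ replicate (r - 1 - k) (GX a) @ replicate s (GX (a+1)) @ [GE \<nu>]
      then t i j r s else 0)"

text \<open>(Q_{ij}(x_{a+2},x_{a+1}) - Q_{ij}(x_a,x_{a+1}))/(x_{a+2}^2-x_a^2) e(nu), written out
  (for i odd only even powers of the first variable occur).\<close>
definition Bodd :: "('i \<Rightarrow> 'i \<Rightarrow> nat \<Rightarrow> nat \<Rightarrow> 'k::field) \<Rightarrow> 'i \<Rightarrow> 'i \<Rightarrow> nat \<Rightarrow> 'i list \<Rightarrow> ('i, 'k) fa" where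
  "Bodd t i j a \<nu> = (\<lambda>w. \<Sum>r\<le>length w + 2. \<Sum>s\<le>length w + 2. \<Sum>k<r div 2.
      if w = replicate (2 * k) (GX (a+2)) @ replicate (r - 2 - 2 * k) (GX a) @ replicate s (GX (a+1)) @ [GE \<nu>]
      then t i j r s else 0)"

definition braid_rhs :: "'i set \<Rightarrow> ('i \<Rightarrow> 'i \<Rightarrow> nat \<Rightarrow> nat \<Rightarrow> 'k::field) \<Rightarrow> nat \<Rightarrow> 'i list \<Rightarrow> ('i, 'k) fa" where
  "braid_rhs Iodd t a \<nu> =
    (if \<nu> ! a = \<nu> ! (a+2) \<and> \<nu> ! a \<notin> Iodd then Beven t (\<nu> ! a) (\<nu> ! (a+1)) a \<nu>
     else if \<nu> ! a = \<nu> ! (a+2) \<and> \<nu> ! a \<in> Iodd then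
       (\<lambda>w. sg (\<nu> ! (a+1) \<in> Iodd) *
          fa_mult (fa_lin [(1, [GX (a+2)]), (- 1, [GX a])]) (Bodd t (\<nu> ! a) (\<nu> ! (a+1)) a \<nu>) w)
     else (\<lambda>_. 0))"

definition relsR :: "'i set \<Rightarrow> ('i \<Rightarrow> 'i \<Rightarrow> nat \<Rightarrow> nat \<Rightarrow> 'k::field) \<Rightarrow> 'i list set \<Rightarrow> nat \<Rightarrow> ('i, 'k) fa set" where
  "relsR Iodd t Ib n =
    {fa_lin ([(1, [GE \<mu>, GE \<nu>])] @ (if \<mu> = \<nu> then [(- 1, [GE \<nu>])] else [])) | \<mu> \<nu>. \<mu> \<in> Ib \<and> \<nu> \<in> Ib}
  \<union> {(\<lambda>w. (if \<exists>\<nu>\<in>Ib. w = [GE \<nu>] then 1 else 0) - (if w = [] then 1 else 0))}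
  \<union> {fa_lin [(1, [GX p, GX q, GE \<nu>]), (- sg (\<nu> ! p \<in> Iodd \<and> \<nu> ! q \<in> Iodd), [GX q, GX p, GE \<nu>])]
      | p q \<nu>. \<nu> \<in> Ib \<and> p < n \<and> q < n \<and> p \<noteq> q}
  \<union> {fa_lin [(1, [GX p, GE \<nu>]), (- 1, [GE \<nu>, GX p])] | p \<nu>. \<nu> \<in> Ib \<and> p < n}
  \<union> {fa_lin [(1, [GT a, GE \<nu>]), (- 1, [GE (swp a \<nu>), GT a])] | a \<nu>. \<nu> \<in> Ib \<and> Suc a < n}
  \<union> {fa_lin [(1, [GT a, GX p, GE \<nu>]),
        (- sg (\<nu> ! p \<in> Iodd \<and> \<nu> ! a \<in> Iodd \<and> \<nu> ! (a+1) \<in> Iodd), [GX p, GT a, GE \<nu>])]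
      | a p \<nu>. \<nu> \<in> Ib \<and> Suc a < n \<and> p < n \<and> p \<noteq> a \<and> p \<noteq> a + 1}
  \<union> {fa_lin ([(1, [GT a, GX (a+1), GE \<nu>]), (- sg (\<nu> ! a \<in> Iodd \<and> \<nu> ! (a+1) \<in> Iodd), [GX a, GT a, GE \<nu>])]
        @ (if \<nu> ! a = \<nu> ! (a+1) then [(- 1, [GE \<nu>])] else []))
      | a \<nu>. \<nu> \<in> Ib \<and> Suc a < n}
  \<union> {fa_lin ([(1, [GX (a+1), GT a, GE \<nu>]), (- sg (\<nu> ! a \<in> Iodd \<and> \<nu> ! (a+1) \<in> Iodd), [GT a, GX a, GE \<nu>])]
        @ (if \<nu> ! a = \<nu> ! (a+1) then [(- 1, [GE \<nu>])] else []))
      | a \<nu>. \<nu> \<in> Ib \<and> Suc a < n}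
  \<union> {(\<lambda>w. fa_lin [(1, [GT a, GT a, GE \<nu>])] w - Qel t (\<nu> ! a) (\<nu> ! (a+1)) a (a+1) \<nu> w)
      | a \<nu>. \<nu> \<in> Ib \<and> Suc a < n}
  \<union> {fa_lin [(1, [GT a, GT b, GE \<nu>]),
        (- sg (\<nu> ! a \<in> Iodd \<and> \<nu> ! (a+1) \<in> Iodd \<and> \<nu> ! b \<in> Iodd \<and> \<nu> ! (b+1) \<in> Iodd), [GT b, GT a, GE \<nu>])]
      | a b \<nu>. \<nu> \<in> Ib \<and> Suc a < n \<and> Suc b < n \<and> (a + 1 < b \<or> b + 1 < a)}
  \<union> {(\<lambda>w. fa_lin [(1, [GT (a+1), GT a, GT (a+1), GE \<nu>]), (- 1, [GT a, GT (a+1), GT a, GE \<nu>])] w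
          - braid_rhs Iodd t a \<nu> w)
      | a \<nu>. \<nu> \<in> Ib \<and> a + 2 < n}"

text \<open>The cyclotomic relation sum_nu x_1^{<h_{nu_1},Lambda>} e(nu) (x_1 is GX 0).\<close>
definition relsCyc :: "('i \<Rightarrow> 'p \<Rightarrow> int) \<Rightarrow> 'p \<Rightarrow> 'i list set \<Rightarrow> nat \<Rightarrow> ('i, 'k::field) fa set" where
  "relsCyc h \<Lambda> Ib n = (if 0 < n then
     {(\<lambda>w. if \<exists>\<nu>\<in>Ib. w = replicate (nat (h (\<nu> ! 0) \<Lambda>)) (GX 0) @ [GE \<nu>] then 1 else 0)} else {})"

definition RL_zero :: "'i set \<Rightarrow> ('i \<Rightarrow> 'i \<Rightarrow> nat \<Rightarrow> nat \<Rightarrow> 'k::field) \<Rightarrow> ('i \<Rightarrow> 'p \<Rightarrow> int) \<Rightarrow> 'p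
    \<Rightarrow> 'i list set \<Rightarrow> nat \<Rightarrow> ('i, 'k) fa \<Rightarrow> bool" where
  "RL_zero Iodd t h \<Lambda> Ib n f \<longleftrightarrow> in_ideal (fa_elem Ib n) (relsR Iodd t Ib n \<union> relsCyc h \<Lambda> Ib n) f"

definition idem :: "'i list \<Rightarrow> ('i, 'k::field) fa" where
  "idem \<nu> = fa_lin [(1, [GE \<nu>])]"

end

theory Submission
  imports Defs
begin

definition ind :: "'i gen list \<Rightarrow> ('i, 'k::field) fa" where
  "ind u = (\<lambda>w. if w = u then 1 else 0)"

lemma fa_lin_Nil: "fa_lin [] = (\<lambda>w. 0)"
  by (simp add: fa_lin_def)

lemma fa_lin_Cons: "fa_lin ((c,u)#xs) = (\<lambda>w. (if w = u then c else 0) + fa_lin xs w)"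
  by (auto simp: fa_lin_def fun_eq_iff)

lemma fa_lin_append: "fa_lin (xs @ ys) = (\<lambda>w. fa_lin xs w + fa_lin ys w)"
  by (auto simp: fa_lin_def fun_eq_iff)

lemma idem_ind: "idem \<nu> = ind [GE \<nu>]"
  by (simp add: idem_def ind_def fa_lin_Cons fa_lin_Nil)

lemma fa_mult_ind_left:
  "fa_mult (ind u) f = (\<lambda>w. if take (length u) w = u then f (drop (length u) w) else 0)"
proof
  fix w :: "'a gen list"
  show "fa_mult (ind u) f w = (if take (length u) w = u then f (drop (length u) w) else 0)"
  proof (cases "take (length u) w = u")
    case True
    then have le: "length u \<le> length w" by (metis length_take min.absorb_iff2 nat_le_linear take_all)
    have "fa_mult (ind u) f w = (\<Sum>i\<le>length w. if i = length u then f (drop i w) else 0)"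
      unfolding fa_mult_def ind_def
      by (rule sum.cong) (auto simp: True)
    also have "\<dots> = f (drop (length u) w)" using le by simp
    finally show ?thesis using True by simp
  next
    case False
    have "fa_mult (ind u) f w = (\<Sum>i\<le>length w. 0)"
      unfolding fa_mult_def ind_def
    proof (rule sum.cong)
      fix i assume "i \<in> {..length w}"
      then have "take i w = u \<Longrightarrow> take (length u) w = u" by auto
      then show "(if take i w = u then 1 else 0) * f (drop i w) = 0" using False by auto
    qed simp
    then show ?thesis using False by simp
  qed
qed

lemma fa_mult_ind_right:
  "fa_mult f (ind v) = (\<lambda>w. if length v \<le> length w \<and> drop (length w - length v) w = v
      then f (take (length w - length v) w) else 0)"
proof
  fix w :: "'a gen list"
  show "fa_mult f (ind v) w = (if length v \<le> length w \<and> drop (length w - length v) w = v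
      then f (take (length w - length v) w) else 0)"
  proof (cases "length v \<le> length w \<and> drop (length w - length v) w = v")
    case True
    have "fa_mult f (ind v) w = (\<Sum>i\<le>length w. if i = length w - length v then f (take i w) else 0)"
      unfolding fa_mult_def ind_def
      by (rule sum.cong) (auto simp: True)
    also have "\<dots> = f (take (length w - length v) w)" by simp
    finally show ?thesis using True by simp
  next
    case False
    have "fa_mult f (ind v) w = (\<Sum>i\<le>length w. 0)"
      unfolding fa_mult_def ind_def
    proof (rule sum.cong)
      fix i assume "i \<in> {..length w}"
      then have "drop i w = v \<Longrightarrow> length v \<le> length w \<and> drop (length w - length v) w = v" by auto
      then show "f (take i w) * (if drop i w = v then 1 else 0) = 0" using False by auto
    qed simp
    then show ?thesis using False by (simp only: if_False) simp
  qed
qed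

lemma fa_mult_ind_ind: "fa_mult (ind u) (ind v) = (ind (u @ v) :: ('i,'k::field) fa)"
proof
  fix w :: "'i gen list"
  show "fa_mult (ind u) (ind v) w = (ind (u @ v) :: ('i,'k::field) fa) w"
    unfolding fa_mult_ind_left by (auto simp: ind_def) (metis append_take_drop_id)
qed

lemma fa_mult_ind_left_lin: "fa_mult (ind u) (\<lambda>w. c * f w + d * g w) =
   (\<lambda>w. c * fa_mult (ind u) f w + d * fa_mult (ind u) g w)"
  by (auto simp: fa_mult_ind_left fun_eq_iff)

lemma fa_mult_ind_right_lin: "fa_mult (\<lambda>w. c * f w + d * g w) (ind u) =
   (\<lambda>w. c * fa_mult f (ind u) w + d * fa_mult g (ind u) w)"
  by (auto simp: fa_mult_ind_right fun_eq_iff)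

lemma in_ideal_diff: "in_ideal M S f \<Longrightarrow> in_ideal M S g \<Longrightarrow> in_ideal M S (\<lambda>w. f w - g w)"
proof -
  assume f: "in_ideal M S f" and g: "in_ideal M S g"
  have "in_ideal M S (\<lambda>w. (-1) * g w)" using g by (rule in_ideal.smult)
  from in_ideal.add[OF f this] show ?thesis by simp
qed

lemma in_ideal_lin: "in_ideal M S f \<Longrightarrow> in_ideal M S g \<Longrightarrow> in_ideal M S (\<lambda>w. c * f w + d * g w)"
  by (intro in_ideal.add in_ideal.smult)

lemma in_ideal_cong: "in_ideal M S f \<Longrightarrow> f = g \<Longrightarrow> in_ideal M S g" by simp

lemma in_ideal_sum: "finite A \<Longrightarrow> (\<And>x. x \<in> A \<Longrightarrow> in_ideal M S (F x)) \<Longrightarrow>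
   in_ideal M S (\<lambda>w. \<Sum>x\<in>A. F x w)"
proof (induction A rule: finite_induct)
  case empty then show ?case by (simp add: in_ideal.zero)
next
  case (insert a A)
  have "in_ideal M S (\<lambda>w. F a w + (\<Sum>x\<in>A. F x w))"
    using insert by (intro in_ideal.add) auto
  then show ?case using insert by simp
qed

lemma fa_elem_ind: "(\<forall>g\<in>set u. valid_gen Ib n g) \<Longrightarrow> fa_elem Ib n (ind u)"
  by (auto simp: fa_elem_def ind_def)

definition xfree :: "'i gen list \<Rightarrow> bool" where
  "xfree w \<longleftrightarrow> (\<forall>p. GX p \<notin> set w)"

definition XF :: "('i, 'k::field) fa \<Rightarrow> 'i gen list set" where
  "XF f = {w. f w \<noteq> 0 \<and> xfree w}"

lemma xfree_simps[simp]: "xfree [] " "xfree (g # w) \<longleftrightarrow> (\<forall>p. g \<noteq> GX p) \<and> xfree w"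
  "xfree (u @ v) \<longleftrightarrow> xfree u \<and> xfree v"
  by (auto simp: xfree_def)

lemma xfree_take: "xfree w \<Longrightarrow> xfree (take i w)"
  by (auto simp: xfree_def dest: in_set_takeD)
lemma xfree_drop: "xfree w \<Longrightarrow> xfree (drop i w)"
  by (auto simp: xfree_def dest: in_set_dropD)

definition allowed :: "('i \<Rightarrow> 'i \<Rightarrow> int) \<Rightarrow> 'i \<Rightarrow> 'i \<Rightarrow> 'i \<Rightarrow> 'i \<Rightarrow> bool" where
  "allowed A X Y x y \<longleftrightarrow> A x y = 0 \<or> (x = X \<and> y = Y)"

definition Gc :: "'i set \<Rightarrow> ('i \<Rightarrow> nat) \<Rightarrow> 'i \<Rightarrow> 'i list \<Rightarrow> nat" where
  "Gc Iodd rk u L = length (filter (\<lambda>l. l \<in> Iodd \<and> rk u < rk l) L)"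

fun invc :: "'i set \<Rightarrow> ('i \<Rightarrow> nat) \<Rightarrow> 'i list \<Rightarrow> nat" where
  "invc Iodd rk [] = 0"
| "invc Iodd rk (l # ls) = (if l \<in> Iodd then length (filter (\<lambda>m. m \<in> Iodd \<and> rk m < rk l) ls) else 0)
     + invc Iodd rk ls"

definition Oc :: "'i set \<Rightarrow> 'i list \<Rightarrow> nat" where
  "Oc Iodd L = length (filter (\<lambda>l. l \<in> Iodd) L)"

definition mm :: "'i set \<Rightarrow> ('i \<Rightarrow> nat) \<Rightarrow> nat \<Rightarrow> 'i list \<Rightarrow> nat" where
  "mm Iodd rk b \<rho> = invc Iodd rk (take b \<rho>) + Gc Iodd rk (\<rho> ! b) (take b \<rho>) * Gc Iodd rk (\<rho> ! Suc b) (take b \<rho>)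
      + Oc Iodd (take b \<rho>)"

definition eps :: "'i set \<Rightarrow> ('i \<Rightarrow> nat) \<Rightarrow> nat \<Rightarrow> 'i list \<Rightarrow> 'k::field" where
  "eps Iodd rk b \<rho> = (if \<rho> ! b \<in> Iodd \<and> \<rho> ! Suc b \<in> Iodd \<and> odd (mm Iodd rk b \<rho>) then -1 else 1)"

definition kap :: "('i \<Rightarrow> 'i \<Rightarrow> int) \<Rightarrow> ('i \<Rightarrow> 'i \<Rightarrow> nat \<Rightarrow> nat \<Rightarrow> 'k::field) \<Rightarrow> ('i \<Rightarrow> nat) \<Rightarrow> 'i \<Rightarrow> 'i \<Rightarrow> 'k" where
  "kap A t rk x y = (if A x y = 0 \<and> rk y < rk x then t x y 0 0 else 1)"

locale modl =
  fixes S :: "'i list set" and Ib :: "'i list set" and n :: nat and I Iodd :: "'i set"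
    and A :: "'i \<Rightarrow> 'i \<Rightarrow> int" and t :: "'i \<Rightarrow> 'i \<Rightarrow> nat \<Rightarrow> nat \<Rightarrow> 'k::field"
    and rk :: "'i \<Rightarrow> nat" and X Y :: 'i
    and h :: "'i \<Rightarrow> 'p \<Rightarrow> int" and \<Lambda> :: 'p
  assumes finIb: "finite Ib" and SIb: "S \<subseteq> Ib"
    and S_len: "\<rho> \<in> S \<Longrightarrow> length \<rho> = n"
    and S_dist: "\<rho> \<in> S \<Longrightarrow> distinct \<rho>"
    and S_I: "\<rho> \<in> S \<Longrightarrow> set \<rho> \<subseteq> I"
    and S_orth: "\<rho> \<in> S \<Longrightarrow> Suc b < n \<Longrightarrow> A (\<rho> ! b) (\<rho> ! Suc b) = 0 \<Longrightarrow> swp b \<rho> \<in> S"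
    and A_zero: "x \<in> I \<Longrightarrow> y \<in> I \<Longrightarrow> A x y = 0 \<longleftrightarrow> A y x = 0"
    and t_sym00: "x \<in> I \<Longrightarrow> y \<in> I \<Longrightarrow> t x y 0 0 = t y x 0 0"
    and t_orth: "x \<in> I \<Longrightarrow> y \<in> I \<Longrightarrow> x \<noteq> y \<Longrightarrow> A x y = 0 \<Longrightarrow> t x y 0 0 \<noteq> 0"
    and t_north: "x \<in> I \<Longrightarrow> y \<in> I \<Longrightarrow> A x y \<noteq> 0 \<Longrightarrow> t x y 0 0 = 0"
    and rk_inj: "\<rho> \<in> S \<Longrightarrow> inj_on rk (set \<rho>)"
    and S_cyc: "\<rho> \<in> S \<Longrightarrow> 0 < n \<Longrightarrow> 0 < h (\<rho> ! 0) \<Lambda>"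
begin

lemma finS: "finite S" using finIb SIb finite_subset by blast

definition cc :: "nat \<Rightarrow> 'i list \<Rightarrow> 'k" where
  "cc b \<rho> = (if \<rho> \<in> S \<and> swp b \<rho> \<in> S \<and> Suc b < length \<rho> \<and> allowed A X Y (\<rho> ! b) (\<rho> ! Suc b)
     then eps Iodd rk b \<rho> * kap A t rk (\<rho> ! b) (\<rho> ! Suc b) else 0)"

fun act :: "'i gen \<Rightarrow> 'i list \<Rightarrow> 'k \<times> 'i list" where
  "act (GE \<nu>) \<rho> = (if \<rho> = \<nu> then 1 else 0, \<rho>)"
| "act (GX p) \<rho> = (0, \<rho>)"
| "act (GT b) \<rho> = (cc b \<rho>, swp b \<rho>)"

fun run :: "'i gen list \<Rightarrow> 'i list \<Rightarrow> 'k \<times> 'i list" where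
  "run [] \<rho> = (1, \<rho>)"
| "run (g # w) \<rho> = (fst (act g (snd (run w \<rho>))) * fst (run w \<rho>), snd (act g (snd (run w \<rho>))))"

definition Cm :: "'i gen list \<Rightarrow> 'i list \<Rightarrow> 'i list \<Rightarrow> 'k" where
  "Cm w \<sigma>' \<sigma> = (if \<sigma> \<in> S \<and> snd (run w \<sigma>) = \<sigma>' then fst (run w \<sigma>) else 0)"

definition Phi :: "('i, 'k) fa \<Rightarrow> 'i list \<Rightarrow> 'i list \<Rightarrow> 'k" where
  "Phi f \<sigma>' \<sigma> = (\<Sum>w\<in>XF f. f w * Cm w \<sigma>' \<sigma>)"

lemma run_append: "run (u @ v) \<rho> = (fst (run u (snd (run v \<rho>))) * fst (run v \<rho>), snd (run u (snd (run v \<rho>))))"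
  by (induction u) auto

lemma act_S: "\<rho> \<in> S \<Longrightarrow> fst (act g \<rho>) \<noteq> 0 \<Longrightarrow> snd (act g \<rho>) \<in> S"
  by (cases g) (auto simp: cc_def split: if_splits)

lemma run_S: "\<rho> \<in> S \<Longrightarrow> fst (run w \<rho>) \<noteq> 0 \<Longrightarrow> snd (run w \<rho>) \<in> S"
  by (induction w) (auto intro: act_S)

lemma run_GX: "\<not> xfree w \<Longrightarrow> fst (run w \<rho>) = 0"
proof (induction w)
  case Nil then show ?case by simp
next
  case (Cons g w)
  then show ?case by (cases g) auto
qed

lemma Cm_GX: "\<not> xfree w \<Longrightarrow> Cm w \<sigma>' \<sigma> = 0"
  by (simp add: Cm_def run_GX)

lemma Cm_out: "\<sigma> \<notin> S \<Longrightarrow> Cm w \<sigma>' \<sigma> = 0"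
  by (simp add: Cm_def)

lemma Cm_out2: "\<sigma>' \<notin> S \<Longrightarrow> Cm w \<sigma>' \<sigma> = 0"
  using run_S by (fastforce simp add: Cm_def)

lemma Cm_append: "Cm (u @ v) \<sigma>'' \<sigma> = (\<Sum>\<rho>\<in>S. Cm u \<sigma>'' \<rho> * Cm v \<rho> \<sigma>)"
proof (cases "\<sigma> \<in> S")
  case False then show ?thesis by (simp add: Cm_def)
next
  case True
  show ?thesis
  proof (cases "fst (run v \<sigma>) = 0")
    case z: True
    have "(\<Sum>\<rho>\<in>S. Cm u \<sigma>'' \<rho> * Cm v \<rho> \<sigma>) = 0"
      by (rule sum.neutral) (simp add: Cm_def z)
    then show ?thesis by (simp add: Cm_def run_append z)
  next
    case nz: False
    then have inS: "snd (run v \<sigma>) \<in> S" using run_S True by blast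
    have "(\<Sum>\<rho>\<in>S. Cm u \<sigma>'' \<rho> * Cm v \<rho> \<sigma>) =
          (\<Sum>\<rho>\<in>S. if \<rho> = snd (run v \<sigma>) then Cm u \<sigma>'' \<rho> * fst (run v \<sigma>) else 0)"
      by (rule sum.cong) (auto simp: Cm_def True)
    also have "\<dots> = Cm u \<sigma>'' (snd (run v \<sigma>)) * fst (run v \<sigma>)"
      using inS finS by simp
    finally show ?thesis using True inS by (simp add: Cm_def run_append)
  qed
qed

lemma Phi_eq: "finite F \<Longrightarrow> XF f \<subseteq> F \<Longrightarrow> Phi f \<sigma>' \<sigma> = (\<Sum>w\<in>F. f w * Cm w \<sigma>' \<sigma>)"
  unfolding Phi_def
  by (rule sum.mono_neutral_left) (use Cm_GX in \<open>fastforce simp: XF_def\<close>)+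

lemma Phi_add: "finite (XF f) \<Longrightarrow> finite (XF g) \<Longrightarrow>
   finite (XF (\<lambda>w. f w + g w)) \<and> Phi (\<lambda>w. f w + g w) \<sigma>' \<sigma> = Phi f \<sigma>' \<sigma> + Phi g \<sigma>' \<sigma>"
proof -
  assume ff: "finite (XF f)" and fg: "finite (XF g)"
  let ?F = "XF f \<union> XF g"
  have sub: "XF (\<lambda>w. f w + g w) \<subseteq> ?F" by (auto simp: XF_def)
  have fin: "finite ?F" using ff fg by simp
  have "Phi (\<lambda>w. f w + g w) \<sigma>' \<sigma> = (\<Sum>w\<in>?F. (f w + g w) * Cm w \<sigma>' \<sigma>)"
    by (rule Phi_eq[OF fin sub])
  also have "\<dots> = (\<Sum>w\<in>?F. f w * Cm w \<sigma>' \<sigma>) + (\<Sum>w\<in>?F. g w * Cm w \<sigma>' \<sigma>)"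
    by (simp add: distrib_right sum.distrib)
  also have "\<dots> = Phi f \<sigma>' \<sigma> + Phi g \<sigma>' \<sigma>"
    using Phi_eq[OF fin, of f] Phi_eq[OF fin, of g] by auto
  finally show ?thesis using finite_subset[OF sub fin] by simp
qed

lemma Phi_smult: "finite (XF f) \<Longrightarrow>
   finite (XF (\<lambda>w. c * f w)) \<and> Phi (\<lambda>w. c * f w) \<sigma>' \<sigma> = c * Phi f \<sigma>' \<sigma>"
proof -
  assume ff: "finite (XF f)"
  have sub: "XF (\<lambda>w. c * f w) \<subseteq> XF f" by (auto simp: XF_def)
  have "Phi (\<lambda>w. c * f w) \<sigma>' \<sigma> = (\<Sum>w\<in>XF f. (c * f w) * Cm w \<sigma>' \<sigma>)"
    by (rule Phi_eq[OF ff sub])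
  also have "\<dots> = c * Phi f \<sigma>' \<sigma>" by (simp add: Phi_def sum_distrib_left mult.assoc)
  finally show ?thesis using finite_subset[OF sub ff] by simp
qed

lemma Phi_zero: "finite (XF (\<lambda>w. 0 :: 'k)) \<and> Phi (\<lambda>w. 0) \<sigma>' \<sigma> = 0"
  by (simp add: XF_def Phi_def)

lemma Phi_ind: "finite (XF (ind u :: ('i,'k) fa)) \<and> Phi (ind u) \<sigma>' \<sigma> = Cm u \<sigma>' \<sigma>"
proof -
  have sub: "XF (ind u :: ('i,'k) fa) \<subseteq> {u}" by (auto simp: XF_def ind_def split: if_splits)
  have "Phi (ind u) \<sigma>' \<sigma> = (\<Sum>w\<in>{u}. ind u w * Cm w \<sigma>' \<sigma>)" by (rule Phi_eq) (use sub in auto)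
  then show ?thesis using finite_subset[OF sub] by (simp add: ind_def)
qed

lemma Phi_fa_lin: "finite (XF (fa_lin xs :: ('i,'k) fa)) \<and>
   Phi (fa_lin xs) \<sigma>' \<sigma> = sum_list (map (\<lambda>(c,u). c * Cm u \<sigma>' \<sigma>) xs)"
proof (induction xs)
  case Nil then show ?case using Phi_zero by (simp add: fa_lin_Nil)
next
  case (Cons p xs)
  obtain c u where p: "p = (c,u)" by (cases p)
  have e: "fa_lin (p # xs) = (\<lambda>w. c * ind u w + fa_lin xs w)"
    by (auto simp: p fa_lin_Cons ind_def fun_eq_iff)
  have i: "finite (XF (\<lambda>w. c * ind u w :: 'k))" "Phi (\<lambda>w. c * ind u w) \<sigma>' \<sigma> = c * Cm u \<sigma>' \<sigma>"
    using Phi_smult[of "ind u" c] Phi_ind[of u] by auto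
  show ?case unfolding e using Phi_add[OF i(1) Cons.IH[THEN conjunct1]] i Cons.IH by (simp add: p)
qed

lemma Phi_sum: "finite B \<Longrightarrow> (\<And>x. x \<in> B \<Longrightarrow> finite (XF (F x))) \<Longrightarrow>
   finite (XF (\<lambda>w. \<Sum>x\<in>B. F x w)) \<and> Phi (\<lambda>w. \<Sum>x\<in>B. F x w) \<sigma>' \<sigma> = (\<Sum>x\<in>B. Phi (F x) \<sigma>' \<sigma>)"
proof (induction B rule: finite_induct)
  case empty then show ?case using Phi_zero by simp
next
  case (insert a B)
  have h1: "finite (XF (F a))" using insert by auto
  have h2: "finite (XF (\<lambda>w. \<Sum>x\<in>B. F x w))" "Phi (\<lambda>w. \<Sum>x\<in>B. F x w) \<sigma>' \<sigma> = (\<Sum>x\<in>B. Phi (F x) \<sigma>' \<sigma>)"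
    using insert by auto
  have e: "(\<lambda>w. \<Sum>x\<in>insert a B. F x w) = (\<lambda>w. F a w + (\<Sum>x\<in>B. F x w))"
    using insert by simp
  show ?case unfolding e using Phi_add[OF h1 h2(1)] h2(2) insert by simp
qed

lemma fa_mult_xf:
  assumes "xfree w"
  shows "fa_mult f g w = (\<Sum>p\<in>{p \<in> XF f \<times> XF g. fst p @ snd p = w}. f (fst p) * g (snd p))"
proof -
  let ?P = "{p \<in> XF f \<times> XF g. fst p @ snd p = w}"
  let ?K = "{i \<in> {..length w}. take i w \<in> XF f \<and> drop i w \<in> XF g}"
  have "fa_mult f g w = (\<Sum>i\<in>?K. f (take i w) * g (drop i w))"
    unfolding fa_mult_def
    by (rule sum.mono_neutral_right) (auto simp: XF_def xfree_take xfree_drop assms)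
  also have "\<dots> = (\<Sum>p\<in>?P. f (fst p) * g (snd p))"
  proof (rule sum.reindex_bij_witness[where i = "\<lambda>p. length (fst p)" and j = "\<lambda>i. (take i w, drop i w)"])
    show "\<And>a. a \<in> ?P \<Longrightarrow> (take (length (fst a)) w, drop (length (fst a)) w) = a" by auto
    show "\<And>a. a \<in> ?P \<Longrightarrow> length (fst a) \<in> ?K" by auto
    show "\<And>i. i \<in> ?K \<Longrightarrow> length (fst (take i w, drop i w)) = i" by auto
    show "\<And>i. i \<in> ?K \<Longrightarrow> (take i w, drop i w) \<in> ?P" by auto
    show "\<And>i. i \<in> ?K \<Longrightarrow> f (fst (take i w, drop i w)) * g (snd (take i w, drop i w)) = f (take i w) * g (drop i w)"
      by simp
  qed
  finally show ?thesis .
qed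

lemma Phi_mult:
  assumes ff: "finite (XF f)" and fg: "finite (XF g)"
  shows "finite (XF (fa_mult f g)) \<and> Phi (fa_mult f g) \<sigma>'' \<sigma> = (\<Sum>\<rho>\<in>S. Phi f \<sigma>'' \<rho> * Phi g \<rho> \<sigma>)"
proof -
  let ?AB = "(\<lambda>p. fst p @ snd p) ` (XF f \<times> XF g)"
  have finAB: "finite ?AB" using ff fg by simp
  have sub: "XF (fa_mult f g) \<subseteq> ?AB"
  proof
    fix w assume w: "w \<in> XF (fa_mult f g)"
    then have xw: "xfree w" and nz: "fa_mult f g w \<noteq> 0" by (auto simp: XF_def)
    have "{p \<in> XF f \<times> XF g. fst p @ snd p = w} \<noteq> {}"
    proof
      assume e: "{p \<in> XF f \<times> XF g. fst p @ snd p = w} = {}"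
      have "fa_mult f g w = 0" unfolding fa_mult_xf[OF xw, of f g] e by simp
      then show False using nz by simp
    qed
    then obtain p where "p \<in> XF f \<times> XF g" "fst p @ snd p = w" by blast
    then show "w \<in> ?AB" by force
  qed
  have "Phi (fa_mult f g) \<sigma>'' \<sigma> = (\<Sum>w\<in>?AB. fa_mult f g w * Cm w \<sigma>'' \<sigma>)"
    by (rule Phi_eq[OF finAB sub])
  also have "\<dots> = (\<Sum>w\<in>?AB. \<Sum>p\<in>{p \<in> XF f \<times> XF g. fst p @ snd p = w}. f (fst p) * g (snd p) * Cm (fst p @ snd p) \<sigma>'' \<sigma>)"
  proof (rule sum.cong[OF refl])
    fix w assume "w \<in> ?AB"
    then have "xfree w" by (auto simp: XF_def)
    then show "fa_mult f g w * Cm w \<sigma>'' \<sigma> = (\<Sum>p\<in>{p \<in> XF f \<times> XF g. fst p @ snd p = w}. f (fst p) * g (snd p) * Cm (fst p @ snd p) \<sigma>'' \<sigma>)"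
      by (simp add: fa_mult_xf sum_distrib_right)
  qed
  also have "\<dots> = (\<Sum>p\<in>XF f \<times> XF g. f (fst p) * g (snd p) * Cm (fst p @ snd p) \<sigma>'' \<sigma>)"
    by (rule sum.group) (use ff fg in auto)
  also have "\<dots> = (\<Sum>p\<in>XF f \<times> XF g. \<Sum>\<rho>\<in>S. (f (fst p) * Cm (fst p) \<sigma>'' \<rho>) * (g (snd p) * Cm (snd p) \<rho> \<sigma>))"
    by (rule sum.cong[OF refl]) (simp add: Cm_append sum_distrib_left mult_ac)
  also have "\<dots> = (\<Sum>\<rho>\<in>S. \<Sum>p\<in>XF f \<times> XF g. (f (fst p) * Cm (fst p) \<sigma>'' \<rho>) * (g (snd p) * Cm (snd p) \<rho> \<sigma>))"
    by (rule sum.swap)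
  also have "\<dots> = (\<Sum>\<rho>\<in>S. Phi f \<sigma>'' \<rho> * Phi g \<rho> \<sigma>)"
    by (rule sum.cong[OF refl]) (simp add: Phi_def sum_product sum.cartesian_product case_prod_beta)
  finally show ?thesis using finite_subset[OF sub finAB] by simp
qed

end

lemma swp_length[simp]: "length (swp b \<rho>) = length \<rho>"
  by (simp add: swp_def)

lemma swp_nth: "Suc b < length \<rho> \<Longrightarrow> swp b \<rho> ! k = (if k = b then \<rho> ! Suc b else if k = Suc b then \<rho> ! b else \<rho> ! k)"
  by (auto simp: swp_def nth_list_update)

lemma swp_nth_b[simp]: "Suc b < length \<rho> \<Longrightarrow> swp b \<rho> ! b = \<rho> ! Suc b"
  and swp_nth_Sb[simp]: "Suc b < length \<rho> \<Longrightarrow> swp b \<rho> ! Suc b = \<rho> ! b"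
  and swp_nth_other[simp]: "Suc b < length \<rho> \<Longrightarrow> k \<noteq> b \<Longrightarrow> k \<noteq> Suc b \<Longrightarrow> swp b \<rho> ! k = \<rho> ! k"
  by (auto simp: swp_nth)

lemma swp_swp[simp]: "Suc b < length \<rho> \<Longrightarrow> swp b (swp b \<rho>) = \<rho>"
  by (rule nth_equalityI) (auto simp: swp_nth)

lemma swp_decomp: "Suc b < length \<rho> \<Longrightarrow> \<rho> = take b \<rho> @ \<rho> ! b # \<rho> ! Suc b # drop (Suc (Suc b)) \<rho>"
  by (metis Cons_nth_drop_Suc Suc_lessD append_take_drop_id)

lemma swp_append: "swp (length p) (p @ x # y # r) = p @ y # x # r"
  by (rule nth_equalityI) (auto simp: swp_nth nth_append nth_Cons' split: if_splits)

lemma swp_eq: assumes "Suc b < length \<rho>"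
  shows "swp b \<rho> = take b \<rho> @ \<rho> ! Suc b # \<rho> ! b # drop (Suc (Suc b)) \<rho>"
proof -
  let ?p = "take b \<rho>"
  have e: "\<rho> = ?p @ \<rho> ! b # \<rho> ! Suc b # drop (Suc (Suc b)) \<rho>" using swp_decomp[OF assms] .
  have l: "length ?p = b" using assms by simp
  have "swp b \<rho> = swp (length ?p) (?p @ \<rho> ! b # \<rho> ! Suc b # drop (Suc (Suc b)) \<rho>)"
    using e l by simp
  then show ?thesis by (simp only: swp_append)
qed

lemma length_filter_swp: "Suc b < length \<rho> \<Longrightarrow> length (filter P (swp b \<rho>)) = length (filter P \<rho>)"
  by (subst swp_eq, simp, subst (3) swp_decomp, auto)

lemma swp_set: "Suc b < length \<rho> \<Longrightarrow> set (swp b \<rho>) = set \<rho>"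
  by (subst swp_eq, simp, subst (3) swp_decomp, auto)

lemma swp_distinct: "Suc b < length \<rho> \<Longrightarrow> distinct (swp b \<rho>) = distinct \<rho>"
  by (subst swp_eq, simp, subst (3) swp_decomp, auto)

lemma take_swp_le: "Suc b < length \<rho> \<Longrightarrow> k \<le> b \<Longrightarrow> take k (swp b \<rho>) = take k \<rho>"
  by (rule nth_equalityI) (auto simp: swp_nth)

lemma take_swp_ge: "Suc b < length \<rho> \<Longrightarrow> Suc b < k \<Longrightarrow> take k (swp b \<rho>) = swp b (take k \<rho>)"
  by (rule nth_equalityI) (auto simp: swp_nth min_def nth_take split: if_splits)

lemma swp_comm: "Suc a < length \<rho> \<Longrightarrow> Suc b < length \<rho> \<Longrightarrow> Suc a < b \<Longrightarrow> swp a (swp b \<rho>) = swp b (swp a \<rho>)"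
  by (rule nth_equalityI) (auto simp: swp_nth)

lemma swp_braid: "Suc (Suc a) < length \<rho> \<Longrightarrow>
  swp (Suc a) (swp a (swp (Suc a) \<rho>)) = swp a (swp (Suc a) (swp a \<rho>))"
  by (rule nth_equalityI) (auto simp: swp_nth)

lemma take_Suc_nth: "b < length \<rho> \<Longrightarrow> take (Suc b) \<rho> = take b \<rho> @ [\<rho> ! b]"
  by (simp add: take_Suc_conv_app_nth)

lemma invc_snoc: "invc Iodd rk (L @ [u]) = invc Iodd rk L + (if u \<in> Iodd then Gc Iodd rk u L else 0)"
  by (induction L) (auto simp: Gc_def)

lemma Gc_snoc: "Gc Iodd rk x (L @ [u]) = Gc Iodd rk x L + (if u \<in> Iodd \<and> rk x < rk u then 1 else 0)"
  by (simp add: Gc_def)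

lemma Oc_snoc: "Oc Iodd (L @ [u]) = Oc Iodd L + (if u \<in> Iodd then 1 else 0)"
  by (simp add: Oc_def)

lemma invc_swap_aux: "invc Iodd rk (p @ x # y # r) + (if x \<in> Iodd \<and> y \<in> Iodd \<and> rk x < rk y then 1 else 0)
   = invc Iodd rk (p @ y # x # r) + (if x \<in> Iodd \<and> y \<in> Iodd \<and> rk y < rk x then 1 else 0)"
  by (induction p) auto

lemma par_aux: "(i::nat) + (if P \<and> c then 1 else 0) = j + (if P \<and> d then 1 else 0) \<Longrightarrow> (c \<longleftrightarrow> \<not> d) \<Longrightarrow>
   even j = (even i = (\<not> P))"
  by (cases P; cases c) auto

lemma invc_swp_parity:
  assumes "Suc a < length L" "rk (L ! a) \<noteq> rk (L ! Suc a)"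
  shows "even (invc Iodd rk (swp a L)) \<longleftrightarrow> (even (invc Iodd rk L) \<longleftrightarrow> \<not> (L ! a \<in> Iodd \<and> L ! Suc a \<in> Iodd))"
proof -
  let ?p = "take a L" and ?x = "L ! a" and ?y = "L ! Suc a" and ?r = "drop (Suc (Suc a)) L"
  have L: "L = ?p @ ?x # ?y # ?r" using swp_decomp[OF assms(1)] .
  have sL: "swp a L = ?p @ ?y # ?x # ?r" using swp_eq[OF assms(1)] .
  have "invc Iodd rk (?p @ ?x # ?y # ?r) + (if ?x \<in> Iodd \<and> ?y \<in> Iodd \<and> rk ?x < rk ?y then 1 else 0)
   = invc Iodd rk (?p @ ?y # ?x # ?r) + (if ?x \<in> Iodd \<and> ?y \<in> Iodd \<and> rk ?y < rk ?x then 1 else 0)"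
    by (rule invc_swap_aux)
  then have "invc Iodd rk L + (if ?x \<in> Iodd \<and> ?y \<in> Iodd \<and> rk ?x < rk ?y then 1 else 0)
   = invc Iodd rk (swp a L) + (if ?x \<in> Iodd \<and> ?y \<in> Iodd \<and> rk ?y < rk ?x then 1 else 0)"
    by (simp only: L[symmetric] sL[symmetric])
  then show ?thesis
    by (rule par_aux[where c = "rk ?x < rk ?y" and P = "?x \<in> Iodd \<and> ?y \<in> Iodd", simplified conj_assoc]) (use assms(2) in auto)
qed

lemma Gc_swp: "Suc a < length L \<Longrightarrow> Gc Iodd rk u (swp a L) = Gc Iodd rk u L"
  by (simp add: Gc_def length_filter_swp)

lemma Oc_swp: "Suc a < length L \<Longrightarrow> Oc Iodd (swp a L) = Oc Iodd L"
  by (simp add: Oc_def length_filter_swp)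

lemma eps_bigon: "Suc b < length \<rho> \<Longrightarrow> eps Iodd rk b (swp b \<rho>) = eps Iodd rk b \<rho>"
  by (auto simp: eps_def mm_def take_swp_le mult.commute)

lemma eps_far_left: "Suc b < length \<rho> \<Longrightarrow> Suc a < b \<Longrightarrow> eps Iodd rk a (swp b \<rho>) = eps Iodd rk a \<rho>"
  by (simp add: eps_def mm_def take_swp_le)

lemma eps_far_right:
  assumes "Suc b < length \<rho>" "Suc a < b" "rk (\<rho> ! a) \<noteq> rk (\<rho> ! Suc a)"
  shows "eps Iodd rk b (swp a \<rho>) = (if \<rho> ! a \<in> Iodd \<and> \<rho> ! Suc a \<in> Iodd \<and> \<rho> ! b \<in> Iodd \<and> \<rho> ! Suc b \<in> Iodd
     then - eps Iodd rk b \<rho> else (eps Iodd rk b \<rho> :: 'k::field))"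
proof -
  have a1: "Suc a < length \<rho>" using assms by simp
  have tk: "take b (swp a \<rho>) = swp a (take b \<rho>)" using take_swp_ge[OF a1] assms by simp
  have la: "Suc a < length (take b \<rho>)" using assms by simp
  have nths: "take b \<rho> ! a = \<rho> ! a" "take b \<rho> ! Suc a = \<rho> ! Suc a" using assms by auto
  have par: "even (invc Iodd rk (swp a (take b \<rho>))) \<longleftrightarrow> (even (invc Iodd rk (take b \<rho>)) \<longleftrightarrow> \<not> (\<rho> ! a \<in> Iodd \<and> \<rho> ! Suc a \<in> Iodd))"
    using invc_swp_parity[OF la, of rk Iodd] assms(3) nths by simp
  have ms: "mm Iodd rk b (swp a \<rho>) = invc Iodd rk (swp a (take b \<rho>)) + Gc Iodd rk (\<rho> ! b) (take b \<rho>) * Gc Iodd rk (\<rho> ! Suc b) (take b \<rho>) + Oc Iodd (take b \<rho>)"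
    using assms a1 by (simp add: mm_def tk Gc_swp[OF la] Oc_swp[OF la])
  have m: "mm Iodd rk b \<rho> = invc Iodd rk (take b \<rho>) + Gc Iodd rk (\<rho> ! b) (take b \<rho>) * Gc Iodd rk (\<rho> ! Suc b) (take b \<rho>) + Oc Iodd (take b \<rho>)"
    by (simp add: mm_def)
  show ?thesis using assms a1 par unfolding eps_def ms m by (auto simp: even_add)
qed

definition bnat :: "bool \<Rightarrow> nat" where "bnat b = (if b then 1 else 0)"

lemma hex_parity:
  fixes F Oo gi gj gk ri rj rk :: nat
  assumes "ri \<noteq> rj" "ri \<noteq> rk" "rj \<noteq> rk"
  shows "(((xb \<and> xc \<and> odd (F + (if xa then gi else 0) + (gj + bnat (xa \<and> rj < ri)) * (gk + bnat (xa \<and> rk < ri)) + (Oo + bnat xa)))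
         \<noteq> (xa \<and> xc \<and> odd (F + gi * gk + Oo))
         ) \<noteq> (xa \<and> xb \<and> odd (F + (if xc then gk else 0) + (gi + bnat (xc \<and> ri < rk)) * (gj + bnat (xc \<and> rj < rk)) + (Oo + bnat xc))))
     = (((xa \<and> xb \<and> odd (F + gi * gj + Oo))
         \<noteq> (xa \<and> xc \<and> odd (F + (if xb then gj else 0) + (gi + bnat (xb \<and> ri < rj)) * (gk + bnat (xb \<and> rk < rj)) + (Oo + bnat xb)))
         ) \<noteq> (xb \<and> xc \<and> odd (F + gj * gk + Oo)))"
  using assms
  apply (cases xa; cases xb; cases xc)
  apply (simp_all add: bnat_def)
  apply (cases "ri < rj"; cases "ri < rk"; cases "rj < rk"; simp add: even_add even_mult_iff)
  apply auto
  done

lemma sgn3: "(if P1 then -1 else 1) * (if P2 then -1 else 1) * (if P3 then -1 else 1) =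
   (if (P1 \<noteq> P2) \<noteq> P3 then -1 else (1::'k::field))"
  by (cases P1; cases P2; cases P3) auto

lemma mm_snoc: "Suc (Suc b) < length \<rho> \<Longrightarrow> mm Iodd rk (Suc b) \<rho> =
   (invc Iodd rk (take b \<rho>) + (if \<rho> ! b \<in> Iodd then Gc Iodd rk (\<rho> ! b) (take b \<rho>) else 0))
   + (Gc Iodd rk (\<rho> ! Suc b) (take b \<rho>) + bnat (\<rho> ! b \<in> Iodd \<and> rk (\<rho> ! Suc b) < rk (\<rho> ! b)))
   * (Gc Iodd rk (\<rho> ! Suc (Suc b)) (take b \<rho>) + bnat (\<rho> ! b \<in> Iodd \<and> rk (\<rho> ! Suc (Suc b)) < rk (\<rho> ! b)))
   + (Oc Iodd (take b \<rho>) + bnat (\<rho> ! b \<in> Iodd))"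
  by (simp add: mm_def take_Suc_nth invc_snoc Gc_snoc Oc_snoc bnat_def)

lemma eps_sq: "eps Iodd rk b \<rho> * eps Iodd rk b \<rho> = (1::'k::field)"
  by (simp add: eps_def)

context modl begin

lemma S_neq: "\<rho> \<in> S \<Longrightarrow> i < length \<rho> \<Longrightarrow> j < length \<rho> \<Longrightarrow> i \<noteq> j \<Longrightarrow> \<rho> ! i \<noteq> \<rho> ! j"
  using S_dist by (simp add: nth_eq_iff_index_eq)

lemma S_rk: "\<rho> \<in> S \<Longrightarrow> i < length \<rho> \<Longrightarrow> j < length \<rho> \<Longrightarrow> i \<noteq> j \<Longrightarrow> rk (\<rho> ! i) \<noteq> rk (\<rho> ! j)"
proof
  assume r: "\<rho> \<in> S" and ij: "i < length \<rho>" "j < length \<rho>" "i \<noteq> j" and e: "rk (\<rho> ! i) = rk (\<rho> ! j)"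
  have "\<rho> ! i = \<rho> ! j" using inj_onD[OF rk_inj[OF r] e] ij by simp
  then show False using S_neq[OF r ij] by simp
qed

lemma S_in_I: "\<rho> \<in> S \<Longrightarrow> i < length \<rho> \<Longrightarrow> \<rho> ! i \<in> I"
  using S_I nth_mem by blast

lemma orth_iff:
  assumes b: "Suc b < length \<sigma>" and sI: "set \<sigma> \<subseteq> I" and z0: "A (\<sigma> ! b) (\<sigma> ! Suc b) = 0 \<or> A (\<sigma> ! Suc b) (\<sigma> ! b) = 0"
  shows "swp b \<sigma> \<in> S \<longleftrightarrow> \<sigma> \<in> S"
proof -
  have b0: "b < length \<sigma>" using b by simp
  have I1: "\<sigma> ! b \<in> I" using nth_mem[OF b0] sI by blast
  have I2: "\<sigma> ! Suc b \<in> I" using nth_mem[OF b] sI by blast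
  have z1: "A (\<sigma> ! b) (\<sigma> ! Suc b) = 0" using z0 A_zero[OF I1 I2] by blast
  have z2: "A (\<sigma> ! Suc b) (\<sigma> ! b) = 0" using z0 A_zero[OF I1 I2] by blast
  show ?thesis
  proof
    assume s: "swp b \<sigma> \<in> S"
    have l: "Suc b < n" using S_len[OF s] b by simp
    have "A (swp b \<sigma> ! b) (swp b \<sigma> ! Suc b) = 0" using b z2 by simp
    then have "swp b (swp b \<sigma>) \<in> S" by (rule S_orth[OF s l])
    then show "\<sigma> \<in> S" using b by simp
  next
    assume s: "\<sigma> \<in> S"
    have l: "Suc b < n" using S_len[OF s] b by simp
    show "swp b \<sigma> \<in> S" by (rule S_orth[OF s l z1])
  qed
qed

lemma cc_def2: "Suc b < length \<rho> \<Longrightarrow> cc b \<rho> = (if \<rho> \<in> S \<and> swp b \<rho> \<in> S \<and> allowed A X Y (\<rho> ! b) (\<rho> ! Suc b)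
     then eps Iodd rk b \<rho> * kap A t rk (\<rho> ! b) (\<rho> ! Suc b) else 0)"
  by (simp add: cc_def)

lemma cc_bigon:
  assumes r: "\<rho> \<in> S" and b: "Suc b < length \<rho>"
  shows "cc b (swp b \<rho>) * cc b \<rho> = t (\<rho> ! b) (\<rho> ! Suc b) 0 0"
proof -
  let ?x = "\<rho> ! b" and ?y = "\<rho> ! Suc b"
  have I: "?x \<in> I" "?y \<in> I" using S_in_I r b by auto
  have ne: "?x \<noteq> ?y" using S_neq[OF r] b by auto
  have rne: "rk ?x \<noteq> rk ?y" using S_rk[OF r] b by auto
  show ?thesis
  proof (cases "A ?x ?y = 0")
    case True
    then have T2: "A ?y ?x = 0" using A_zero I by auto
    have s: "swp b \<rho> \<in> S" using S_orth[OF r] S_len[OF r] b True by auto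
    have e: "eps Iodd rk b (swp b \<rho>) * eps Iodd rk b \<rho> = (1::'k)"
      by (simp only: eps_bigon[OF b] eps_sq)
    have k: "kap A t rk ?y ?x * kap A t rk ?x ?y = t ?x ?y 0 0"
      using rne True T2 t_sym00[OF I] by (auto simp: kap_def)
    have c1: "cc b \<rho> = eps Iodd rk b \<rho> * kap A t rk ?x ?y"
      using b r s True by (simp add: cc_def2 allowed_def)
    have c2: "cc b (swp b \<rho>) = eps Iodd rk b (swp b \<rho>) * kap A t rk ?y ?x"
      by (subst cc_def2) (use b r s T2 in \<open>simp_all add: allowed_def\<close>)
    have "cc b (swp b \<rho>) * cc b \<rho> = (eps Iodd rk b (swp b \<rho>) * eps Iodd rk b \<rho>) * (kap A t rk ?y ?x * kap A t rk ?x ?y)"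
      unfolding c1 c2 by (simp only: mult_ac)
    then show ?thesis using e k by simp
  next
    case False
    then have F2: "A ?y ?x \<noteq> 0" using A_zero I by auto
    have t0: "t ?x ?y 0 0 = 0" using t_north I False by auto
    have "\<not> (allowed A X Y ?x ?y \<and> allowed A X Y ?y ?x)"
      using False F2 ne by (auto simp: allowed_def)
    then have "cc b (swp b \<rho>) = 0 \<or> cc b \<rho> = 0" using b by (auto simp: cc_def2)
    then show ?thesis using t0 by auto
  qed
qed


lemma cc_square:
  assumes r: "\<rho> \<in> S" and ab: "Suc a < b" and b: "Suc b < length \<rho>"
  shows "cc a (swp b \<rho>) * cc b \<rho> =
    (if \<rho> ! a \<in> Iodd \<and> \<rho> ! Suc a \<in> Iodd \<and> \<rho> ! b \<in> Iodd \<and> \<rho> ! Suc b \<in> Iodd then -1 else 1)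
     * (cc b (swp a \<rho>) * cc a \<rho>)"
proof -
  have a: "Suc a < length \<rho>" using ab b by simp
  let ?xa = "\<rho> ! a" and ?ya = "\<rho> ! Suc a" and ?xb = "\<rho> ! b" and ?yb = "\<rho> ! Suc b"
  let ?F = "swp a (swp b \<rho>)"
  have F2: "swp b (swp a \<rho>) = ?F" using swp_comm[OF a b ab] by simp
  have n1: "swp b \<rho> ! a = ?xa" "swp b \<rho> ! Suc a = ?ya" using ab b by auto
  have n2: "swp a \<rho> ! b = ?xb" "swp a \<rho> ! Suc b = ?yb" using ab b by auto
  have sI: "set \<rho> \<subseteq> I" using S_I[OF r] .
  have sI1: "set (swp b \<rho>) \<subseteq> I" using swp_set[OF b] sI by simp
  have sI2: "set (swp a \<rho>) \<subseteq> I" using swp_set[OF a] sI by simp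
  have dxa: "?xa \<noteq> ?xb" using S_neq[OF r] ab b by simp
  have rne: "rk ?xa \<noteq> rk ?ya" using S_rk[OF r] a by simp
  have e1: "eps Iodd rk a (swp b \<rho>) = eps Iodd rk a \<rho>" using eps_far_left[OF b ab] .
  have e2: "eps Iodd rk b (swp a \<rho>) = (if ?xa \<in> Iodd \<and> ?ya \<in> Iodd \<and> ?xb \<in> Iodd \<and> ?yb \<in> Iodd
     then - eps Iodd rk b \<rho> else (eps Iodd rk b \<rho> :: 'k))" using eps_far_right[OF b ab rne] .
  have L: "cc a (swp b \<rho>) * cc b \<rho> = (if swp b \<rho> \<in> S \<and> ?F \<in> S \<and> allowed A X Y ?xa ?ya \<and> allowed A X Y ?xb ?yb
      then (eps Iodd rk a \<rho> * kap A t rk ?xa ?ya) * (eps Iodd rk b \<rho> * kap A t rk ?xb ?yb) else 0)"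
    using a b r by (simp add: cc_def2 n1 e1)
  have R: "cc b (swp a \<rho>) * cc a \<rho> = (if swp a \<rho> \<in> S \<and> ?F \<in> S \<and> allowed A X Y ?xa ?ya \<and> allowed A X Y ?xb ?yb
      then (eps Iodd rk b (swp a \<rho>) * kap A t rk ?xb ?yb) * (eps Iodd rk a \<rho> * kap A t rk ?xa ?ya) else 0)"
    using a b r by (simp add: cc_def2 n2 F2)
  have key: "allowed A X Y ?xa ?ya \<Longrightarrow> allowed A X Y ?xb ?yb \<Longrightarrow> ?F \<in> S \<Longrightarrow> swp b \<rho> \<in> S \<and> swp a \<rho> \<in> S"
  proof -
    assume ca: "allowed A X Y ?xa ?ya" and cb: "allowed A X Y ?xb ?yb" and FS: "?F \<in> S"
    have "A ?xa ?ya = 0 \<or> A ?xb ?yb = 0" using ca cb dxa by (auto simp: allowed_def)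
    then show ?thesis
    proof
      assume z: "A ?xa ?ya = 0"
      have s1: "swp a \<rho> \<in> S" using orth_iff[OF a sI] z r by simp
      have "swp b \<rho> \<in> S" using orth_iff[of a "swp b \<rho>"] a sI1 z n1 FS by simp
      then show ?thesis using s1 by simp
    next
      assume z: "A ?xb ?yb = 0"
      have s1: "swp b \<rho> \<in> S" using orth_iff[OF b sI] z r by simp
      have "swp a \<rho> \<in> S" using orth_iff[of b "swp a \<rho>"] b sI2 z n2 FS F2 by simp
      then show ?thesis using s1 by simp
    qed
  qed
  show ?thesis
  proof (cases "allowed A X Y ?xa ?ya \<and> allowed A X Y ?xb ?yb \<and> ?F \<in> S")
    case True
    then have k: "swp b \<rho> \<in> S" "swp a \<rho> \<in> S" using key by auto
    show ?thesis unfolding L R e2 using True k by simp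
  next
    case False
    then show ?thesis unfolding L R by auto
  qed
qed


lemma eps_alt: "eps Iodd rk b \<rho> = (if \<rho> ! b \<in> Iodd \<and> \<rho> ! Suc b \<in> Iodd \<and> odd (mm Iodd rk b \<rho>) then -1 else (1::'k))"
  by (simp add: eps_def)

lemma cc_hex:
  assumes r: "\<rho> \<in> S" and a: "Suc (Suc a) < length \<rho>"
  shows "cc (Suc a) (swp a (swp (Suc a) \<rho>)) * cc a (swp (Suc a) \<rho>) * cc (Suc a) \<rho> =
         cc a (swp (Suc a) (swp a \<rho>)) * cc (Suc a) (swp a \<rho>) * cc a \<rho>"
proof -
  have a1: "Suc a < length \<rho>" using a by simp
  let ?i = "\<rho> ! a" and ?j = "\<rho> ! Suc a" and ?k = "\<rho> ! Suc (Suc a)"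
  define n1 where "n1 = swp (Suc a) \<rho>"
  define n2 where "n2 = swp a n1"
  define n3 where "n3 = swp (Suc a) n2"
  define m1 where "m1 = swp a \<rho>"
  define m2 where "m2 = swp (Suc a) m1"
  have m3: "swp a m2 = n3" unfolding n3_def n2_def n1_def m2_def m1_def using swp_braid[OF a] by simp
  have len: "length n1 = length \<rho>" "length n2 = length \<rho>" "length n3 = length \<rho>" "length m1 = length \<rho>" "length m2 = length \<rho>"
    by (simp_all add: n1_def n2_def n3_def m1_def m2_def)
  have ln1: "n1 ! a = ?i" "n1 ! Suc a = ?k" "n1 ! Suc (Suc a) = ?j" using a by (auto simp: n1_def)
  have ln2: "n2 ! a = ?k" "n2 ! Suc a = ?i" "n2 ! Suc (Suc a) = ?j" using a ln1 len by (auto simp: n2_def)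
  have ln3: "n3 ! a = ?k" "n3 ! Suc a = ?j" "n3 ! Suc (Suc a) = ?i" using a ln2 len by (auto simp: n3_def)
  have lm1: "m1 ! a = ?j" "m1 ! Suc a = ?i" "m1 ! Suc (Suc a) = ?k" using a by (auto simp: m1_def)
  have lm2: "m2 ! a = ?j" "m2 ! Suc a = ?k" "m2 ! Suc (Suc a) = ?i" using a lm1 len by (auto simp: m2_def)
  let ?L = "take a \<rho>"
  have tk: "take a n1 = ?L" "take a n2 = ?L" "take a m1 = ?L" "take a m2 = ?L"
    using a len by (simp_all add: n1_def n2_def m1_def m2_def take_swp_le)
  have sI: "set \<rho> \<subseteq> I" using S_I[OF r] .
  have sets: "set n1 = set \<rho>" "set n2 = set \<rho>" "set m1 = set \<rho>" "set m2 = set \<rho>"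
    using a len by (simp_all add: n1_def n2_def m1_def m2_def swp_set)
  have dij: "?i \<noteq> ?j" "?i \<noteq> ?k" "?j \<noteq> ?k" using S_neq[OF r] a by auto
  have rij: "rk ?i \<noteq> rk ?j" "rk ?i \<noteq> rk ?k" "rk ?j \<noteq> rk ?k" using S_rk[OF r] a by auto
  have f1: "A ?i ?j = 0 \<Longrightarrow> m1 \<in> S" using orth_iff[OF a1 sI] r by (simp add: m1_def)
  have f2: "A ?i ?j = 0 \<Longrightarrow> (n3 \<in> S \<longleftrightarrow> n2 \<in> S)"
    using orth_iff[of "Suc a" n2] len a sets sI ln2 by (simp add: n3_def)
  have f3: "A ?i ?k = 0 \<Longrightarrow> (n2 \<in> S \<longleftrightarrow> n1 \<in> S)"
    using orth_iff[of a n1] len a1 sets sI ln1 by (simp add: n2_def)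
  have f4: "A ?i ?k = 0 \<Longrightarrow> (m2 \<in> S \<longleftrightarrow> m1 \<in> S)"
    using orth_iff[of "Suc a" m1] len a sets sI lm1 by (simp add: m2_def)
  have f5: "A ?j ?k = 0 \<Longrightarrow> n1 \<in> S" using orth_iff[OF a sI] r by (simp add: n1_def)
  have f6: "A ?j ?k = 0 \<Longrightarrow> (n3 \<in> S \<longleftrightarrow> m2 \<in> S)"
    using orth_iff[of a m2] len a1 sets sI lm2 m3 by simp
  have key: "allowed A X Y ?i ?j \<Longrightarrow> allowed A X Y ?i ?k \<Longrightarrow> allowed A X Y ?j ?k \<Longrightarrow>
     (n1 \<in> S \<and> n2 \<in> S \<and> n3 \<in> S) \<longleftrightarrow> (m1 \<in> S \<and> m2 \<in> S \<and> n3 \<in> S)"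
    unfolding allowed_def using f1 f2 f3 f4 f5 f6 dij by metis
  let ?F = "invc Iodd rk ?L" and ?O = "Oc Iodd ?L"
  let ?gi = "Gc Iodd rk ?i ?L" and ?gj = "Gc Iodd rk ?j ?L" and ?gk = "Gc Iodd rk ?k ?L"
  have E1: "eps Iodd rk (Suc a) \<rho> = (if ?j \<in> Iodd \<and> ?k \<in> Iodd \<and> odd (?F + (if ?i \<in> Iodd then ?gi else 0) + (?gj + bnat (?i \<in> Iodd \<and> rk ?j < rk ?i)) * (?gk + bnat (?i \<in> Iodd \<and> rk ?k < rk ?i)) + (?O + bnat (?i \<in> Iodd))) then -1 else (1::'k))"
  proof -
    have "mm Iodd rk (Suc a) \<rho> = ?F + (if ?i \<in> Iodd then ?gi else 0) + (?gj + bnat (?i \<in> Iodd \<and> rk ?j < rk ?i)) * (?gk + bnat (?i \<in> Iodd \<and> rk ?k < rk ?i)) + (?O + bnat (?i \<in> Iodd))"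
      using mm_snoc[of a \<rho> Iodd rk] a by simp
    then show ?thesis by (simp only: eps_alt)
  qed
  have E2: "eps Iodd rk a n1 = (if ?i \<in> Iodd \<and> ?k \<in> Iodd \<and> odd (?F + ?gi * ?gk + ?O) then -1 else (1::'k))"
    by (simp add: eps_alt mm_def tk ln1)
  have E3: "eps Iodd rk (Suc a) n2 = (if ?i \<in> Iodd \<and> ?j \<in> Iodd \<and> odd (?F + (if ?k \<in> Iodd then ?gk else 0) + (?gi + bnat (?k \<in> Iodd \<and> rk ?i < rk ?k)) * (?gj + bnat (?k \<in> Iodd \<and> rk ?j < rk ?k)) + (?O + bnat (?k \<in> Iodd))) then -1 else (1::'k))"
  proof -
    have "mm Iodd rk (Suc a) n2 = ?F + (if ?k \<in> Iodd then ?gk else 0) + (?gi + bnat (?k \<in> Iodd \<and> rk ?i < rk ?k)) * (?gj + bnat (?k \<in> Iodd \<and> rk ?j < rk ?k)) + (?O + bnat (?k \<in> Iodd))"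
      using mm_snoc[of a n2 Iodd rk] a len by (simp add: tk ln2)
    then show ?thesis by (simp only: eps_alt ln2)
  qed
  have E4: "eps Iodd rk a \<rho> = (if ?i \<in> Iodd \<and> ?j \<in> Iodd \<and> odd (?F + ?gi * ?gj + ?O) then -1 else (1::'k))"
    by (simp add: eps_alt mm_def)
  have E5: "eps Iodd rk (Suc a) m1 = (if ?i \<in> Iodd \<and> ?k \<in> Iodd \<and> odd (?F + (if ?j \<in> Iodd then ?gj else 0) + (?gi + bnat (?j \<in> Iodd \<and> rk ?i < rk ?j)) * (?gk + bnat (?j \<in> Iodd \<and> rk ?k < rk ?j)) + (?O + bnat (?j \<in> Iodd))) then -1 else (1::'k))"
  proof -
    have "mm Iodd rk (Suc a) m1 = ?F + (if ?j \<in> Iodd then ?gj else 0) + (?gi + bnat (?j \<in> Iodd \<and> rk ?i < rk ?j)) * (?gk + bnat (?j \<in> Iodd \<and> rk ?k < rk ?j)) + (?O + bnat (?j \<in> Iodd))"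
      using mm_snoc[of a m1 Iodd rk] a len by (simp add: tk lm1)
    then show ?thesis by (simp only: eps_alt lm1)
  qed
  have E6: "eps Iodd rk a m2 = (if ?j \<in> Iodd \<and> ?k \<in> Iodd \<and> odd (?F + ?gj * ?gk + ?O) then -1 else (1::'k))"
    by (simp add: eps_alt mm_def tk lm2)
  have hp: "eps Iodd rk (Suc a) n2 * eps Iodd rk a n1 * eps Iodd rk (Suc a) \<rho> =
            (eps Iodd rk a m2 * eps Iodd rk (Suc a) m1 * eps Iodd rk a \<rho> :: 'k)"
  proof -
    have "eps Iodd rk (Suc a) n2 * eps Iodd rk a n1 * eps Iodd rk (Suc a) \<rho> =
          (eps Iodd rk (Suc a) \<rho> * eps Iodd rk a n1 * eps Iodd rk (Suc a) n2 :: 'k)" by (simp only: mult_ac)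
    also have "\<dots> = eps Iodd rk a \<rho> * eps Iodd rk (Suc a) m1 * eps Iodd rk a m2"
      unfolding E1 E2 E3 E4 E5 E6 sgn3
      unfolding hex_parity[OF rij, where xa="?i \<in> Iodd" and xb="?j \<in> Iodd" and xc="?k \<in> Iodd" and F="?F" and Oo="?O" and gi="?gi" and gj="?gj" and gk="?gk"]
      by (rule refl)
    also have "\<dots> = eps Iodd rk a m2 * eps Iodd rk (Suc a) m1 * eps Iodd rk a \<rho>" by (simp only: mult_ac)
    finally show ?thesis .
  qed
  have L: "cc (Suc a) n2 * cc a n1 * cc (Suc a) \<rho> =
     (if n1 \<in> S \<and> n2 \<in> S \<and> n3 \<in> S \<and> allowed A X Y ?i ?j \<and> allowed A X Y ?i ?k \<and> allowed A X Y ?j ?k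
      then (eps Iodd rk (Suc a) n2 * eps Iodd rk a n1 * eps Iodd rk (Suc a) \<rho>) * (kap A t rk ?i ?j * kap A t rk ?i ?k * kap A t rk ?j ?k) else 0)"
    using a a1 len r by (simp add: cc_def2 ln1 ln2 n1_def[symmetric] n2_def[symmetric] n3_def[symmetric] mult_ac)
  have R: "cc a m2 * cc (Suc a) m1 * cc a \<rho> =
     (if m1 \<in> S \<and> m2 \<in> S \<and> n3 \<in> S \<and> allowed A X Y ?i ?j \<and> allowed A X Y ?i ?k \<and> allowed A X Y ?j ?k
      then (eps Iodd rk a m2 * eps Iodd rk (Suc a) m1 * eps Iodd rk a \<rho>) * (kap A t rk ?i ?j * kap A t rk ?i ?k * kap A t rk ?j ?k) else 0)"
    using a a1 len r m3 by (simp add: cc_def2 lm1 lm2 m1_def[symmetric] m2_def[symmetric] mult_ac)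
  have "cc (Suc a) n2 * cc a n1 * cc (Suc a) \<rho> = cc a m2 * cc (Suc a) m1 * cc a \<rho>"
    unfolding L R hp using key by auto
  then show ?thesis by (simp add: n1_def n2_def m1_def m2_def)
qed

end

context modl begin

definition gr :: "('i, 'k) fa \<Rightarrow> bool" where
  "gr f \<longleftrightarrow> finite (XF f) \<and> (\<forall>\<sigma> \<sigma>'. \<sigma> \<in> S \<longrightarrow> Phi f \<sigma>' \<sigma> = 0)"

lemma Cm_simp: "Cm w \<sigma>' \<sigma> = (if \<sigma> \<in> S \<and> snd (run w \<sigma>) = \<sigma>' then fst (run w \<sigma>) else 0)"
  by (rule Cm_def)

lemma Cm_GX_simp[simp]: "\<not> xfree w \<Longrightarrow> Cm w \<sigma>' \<sigma> = 0"
  by (rule Cm_GX)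

lemma Phi_diff: "finite (XF f) \<Longrightarrow> finite (XF g) \<Longrightarrow>
   finite (XF (\<lambda>w. f w - g w)) \<and> Phi (\<lambda>w. f w - g w) \<sigma>' \<sigma> = Phi f \<sigma>' \<sigma> - Phi g \<sigma>' \<sigma>"
proof -
  assume ff: "finite (XF f)" and fg: "finite (XF g)"
  have m: "(\<lambda>w. (-1) * g w) = (\<lambda>w. - g w)" by simp
  have g': "finite (XF (\<lambda>w. - g w))" "Phi (\<lambda>w. - g w) \<sigma>' \<sigma> = - Phi g \<sigma>' \<sigma>"
    using Phi_smult[OF fg, of "-1" \<sigma>' \<sigma>] unfolding m by auto
  have e: "(\<lambda>w. f w - g w) = (\<lambda>w. f w + - g w)" by simp
  show ?thesis unfolding e using Phi_add[OF ff g'(1)] g'(2) by simp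
qed

lemma gr_fa_lin: "(\<And>\<sigma> \<sigma>'. \<sigma> \<in> S \<Longrightarrow> sum_list (map (\<lambda>(c,u). c * Cm u \<sigma>' \<sigma>) xs) = 0) \<Longrightarrow> gr (fa_lin xs)"
  using Phi_fa_lin by (simp add: gr_def)

lemma S_len_nth: "\<nu> \<in> S \<Longrightarrow> Suc a < n \<Longrightarrow> \<nu> ! a \<noteq> \<nu> ! Suc a"
  using S_neq[of \<nu> a "Suc a"] S_len by simp

lemma gr1: "gr (fa_lin ([(1, [GE \<mu>, GE \<nu>])] @ (if \<mu> = \<nu> then [(- 1, [GE \<nu>])] else [])))"
  by (rule gr_fa_lin) (auto simp: Cm_simp)

lemma sum_ind_eq: "finite BB \<Longrightarrow> (if \<exists>\<nu>\<in>BB. w = [GE \<nu>] then 1 else 0) = (\<Sum>\<nu>\<in>BB. ind [GE \<nu>] w :: 'k)"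
  by (auto simp: ind_def)

lemma gr2: "gr (\<lambda>w. (if \<exists>\<nu>\<in>Ib. w = [GE \<nu>] then 1 else 0) - (if w = [] then 1 else (0::'k)))"
proof -
  have e: "(\<lambda>w. (if \<exists>\<nu>\<in>Ib. w = [GE \<nu>] then 1 else 0) - (if w = [] then 1 else (0::'k))) =
     (\<lambda>w. (\<Sum>\<nu>\<in>Ib. ind [GE \<nu>] w) - ind [] w)"
    using finIb by (auto simp: ind_def fun_eq_iff)
  have s: "finite (XF (\<lambda>w. \<Sum>\<nu>\<in>Ib. ind [GE \<nu>] w :: 'k))"
    "\<And>\<sigma>' \<sigma>. Phi (\<lambda>w. \<Sum>\<nu>\<in>Ib. ind [GE \<nu>] w :: 'k) \<sigma>' \<sigma> = (\<Sum>\<nu>\<in>Ib. Phi (ind [GE \<nu>]) \<sigma>' \<sigma>)"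
    using Phi_sum[OF finIb, of "\<lambda>\<nu>. ind [GE \<nu>]"] Phi_ind by auto
  show ?thesis unfolding e gr_def
  proof (intro conjI allI impI)
    show "finite (XF (\<lambda>w. (\<Sum>\<nu>\<in>Ib. ind [GE \<nu>] w) - ind [] w :: 'k))"
      by (rule conjunct1[OF Phi_diff[OF s(1) Phi_ind[of "[]", THEN conjunct1]]])
    fix \<sigma> \<sigma>' assume \<sigma>: "\<sigma> \<in> S"
    have "Phi (\<lambda>w. (\<Sum>\<nu>\<in>Ib. ind [GE \<nu>] w) - ind [] w :: 'k) \<sigma>' \<sigma> = (\<Sum>\<nu>\<in>Ib. Cm [GE \<nu>] \<sigma>' \<sigma>) - Cm [] \<sigma>' \<sigma>"
      using Phi_diff[OF s(1) Phi_ind[of "[]", THEN conjunct1]] s(2) Phi_ind by simp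
    also have "(\<Sum>\<nu>\<in>Ib. Cm [GE \<nu>] \<sigma>' \<sigma>) = (\<Sum>\<nu>\<in>Ib. if \<nu> = \<sigma> then (if \<sigma>' = \<sigma> then 1 else 0) else 0)"
      by (rule sum.cong) (auto simp: Cm_simp \<sigma>)
    also have "\<dots> = (if \<sigma>' = \<sigma> then 1 else 0)" using \<sigma> SIb finIb by auto
    finally show "Phi (\<lambda>w. (\<Sum>\<nu>\<in>Ib. ind [GE \<nu>] w) - ind [] w :: 'k) \<sigma>' \<sigma> = 0" by (simp add: Cm_simp \<sigma>)
  qed
qed

lemma gr3: "gr (fa_lin [(1, [GX p, GX q, GE \<nu>]), (c, [GX q, GX p, GE \<nu>])])"
  by (rule gr_fa_lin) simp

lemma gr4: "gr (fa_lin [(1, [GX p, GE \<nu>]), (- 1, [GE \<nu>, GX p])])"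
  by (rule gr_fa_lin) simp

lemma gr5: "gr (fa_lin [(1, [GT a, GE \<nu>]), (- 1, [GE (swp a \<nu>), GT a])])"
proof (rule gr_fa_lin)
  fix \<sigma> \<sigma>' assume \<sigma>: "\<sigma> \<in> S"
  have "cc a \<sigma> \<noteq> 0 \<Longrightarrow> swp a \<sigma> = swp a \<nu> \<Longrightarrow> \<sigma> = \<nu>"
  proof -
    assume c: "cc a \<sigma> \<noteq> 0" and e: "swp a \<sigma> = swp a \<nu>"
    have l: "Suc a < length \<sigma>" using c by (simp add: cc_def split: if_splits)
    have l2: "Suc a < length \<nu>" using l e by (metis swp_length)
    show "\<sigma> = \<nu>" using arg_cong[OF e, of "swp a"] l l2 by simp
  qed
  then show "sum_list (map (\<lambda>(c, u). c * Cm u \<sigma>' \<sigma>) [(1, [GT a, GE \<nu>]), (- 1, [GE (swp a \<nu>), GT a])]) = 0"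
    by (auto simp: Cm_simp)
qed

lemma gr6: "gr (fa_lin [(1, [GT a, GX p, GE \<nu>]), (c, [GX p, GT a, GE \<nu>])])"
  by (rule gr_fa_lin) simp

lemma gr7: "Suc a < n \<Longrightarrow> gr (fa_lin ([(1, [GT a, GX (a+1), GE \<nu>]), (c, [GX a, GT a, GE \<nu>])]
        @ (if \<nu> ! a = \<nu> ! (a+1) then [(- 1, [GE \<nu>])] else [])))"
  by (rule gr_fa_lin) (auto simp: Cm_simp dest: S_len_nth)

lemma gr8: "Suc a < n \<Longrightarrow> gr (fa_lin ([(1, [GX (a+1), GT a, GE \<nu>]), (c, [GT a, GX a, GE \<nu>])]
        @ (if \<nu> ! a = \<nu> ! (a+1) then [(- 1, [GE \<nu>])] else [])))"
  by (rule gr_fa_lin) (auto simp: Cm_simp dest: S_len_nth)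


lemma Cm_short: "\<sigma> \<in> S \<Longrightarrow> Cm [GE \<nu>] \<sigma>' \<sigma> = (if \<sigma> = \<nu> \<and> \<sigma>' = \<sigma> then 1 else 0)"
  by (auto simp: Cm_simp)

lemma xfree_rep: "xfree (replicate r (GX p) @ w) \<longleftrightarrow> r = 0 \<and> xfree w"
  by (cases r) auto

lemma Qel_xf: "xfree w \<Longrightarrow> Qel t i j a b \<nu> w = (if w = [GE \<nu>] then t i j 0 0 else 0)"
proof -
  assume xw: "xfree w"
  have "Qel t i j a b \<nu> w = (\<Sum>r\<le>length w. \<Sum>s\<le>length w. if r = 0 \<and> s = 0 \<and> w = [GE \<nu>] then t i j 0 0 else 0)"
    unfolding Qel_def
  proof (intro sum.cong refl)
    fix r s
    show "(if w = replicate r (GX a) @ replicate s (GX b) @ [GE \<nu>] then t i j r s else 0) =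
          (if r = 0 \<and> s = 0 \<and> w = [GE \<nu>] then t i j 0 0 else 0)"
    proof (cases "w = replicate r (GX a) @ replicate s (GX b) @ [GE \<nu>]")
      case True
      then have "r = 0 \<and> s = 0" using xw xfree_rep by (metis append.assoc xfree_simps(3))
      then show ?thesis using True by simp
    next
      case False then show ?thesis by auto
    qed
  qed
  also have "\<dots> = (if w = [GE \<nu>] then t i j 0 0 else 0)"
    by (simp add: if_distrib sum.delta)
  finally show ?thesis .
qed

lemma Phi_Qel: "finite (XF (Qel t i j a b \<nu>)) \<and> Phi (Qel t i j a b \<nu>) \<sigma>' \<sigma> = t i j 0 0 * Cm [GE \<nu>] \<sigma>' \<sigma>"
proof -
  have sub: "XF (Qel t i j a b \<nu>) \<subseteq> {[GE \<nu>]}" by (auto simp: XF_def Qel_xf split: if_splits)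
  have "Phi (Qel t i j a b \<nu>) \<sigma>' \<sigma> = (\<Sum>w\<in>{[GE \<nu>]}. Qel t i j a b \<nu> w * Cm w \<sigma>' \<sigma>)"
    by (rule Phi_eq) (use sub in auto)
  then show ?thesis using finite_subset[OF sub] by (simp add: Qel_xf)
qed

lemma gr9: "Suc a < n \<Longrightarrow> gr (\<lambda>w. fa_lin [(1, [GT a, GT a, GE \<nu>])] w - Qel t (\<nu> ! a) (\<nu> ! (a+1)) a (a+1) \<nu> w)"
proof -
  assume an: "Suc a < n"
  let ?Q = "Qel t (\<nu> ! a) (\<nu> ! (a+1)) a (a+1) \<nu>"
  have d: "finite (XF (\<lambda>w. fa_lin [(1, [GT a, GT a, GE \<nu>])] w - ?Q w))"
    "\<And>\<sigma>' \<sigma>. Phi (\<lambda>w. fa_lin [(1, [GT a, GT a, GE \<nu>])] w - ?Q w) \<sigma>' \<sigma> =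
       Cm [GT a, GT a, GE \<nu>] \<sigma>' \<sigma> - t (\<nu> ! a) (\<nu> ! (a+1)) 0 0 * Cm [GE \<nu>] \<sigma>' \<sigma>"
    using Phi_diff[OF Phi_fa_lin[THEN conjunct1] Phi_Qel[THEN conjunct1]] Phi_fa_lin Phi_Qel by auto
  show ?thesis unfolding gr_def
  proof (intro conjI allI impI d(1))
    fix \<sigma> \<sigma>' assume \<sigma>: "\<sigma> \<in> S"
    show "Phi (\<lambda>w. fa_lin [(1, [GT a, GT a, GE \<nu>])] w - ?Q w) \<sigma>' \<sigma> = 0"
    proof (cases "\<sigma> = \<nu>")
      case True
      have l: "Suc a < length \<nu>" using S_len \<sigma> True an by simp
      have "Cm [GT a, GT a, GE \<nu>] \<sigma>' \<sigma> = (if \<sigma>' = \<nu> then cc a (swp a \<nu>) * cc a \<nu> else 0)"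
        using \<sigma> True l by (simp add: Cm_simp)
      also have "\<dots> = (if \<sigma>' = \<nu> then t (\<nu> ! a) (\<nu> ! Suc a) 0 0 else 0)"
        using cc_bigon[of \<nu> a] \<sigma> True l by simp
      finally show ?thesis unfolding d(2) using \<sigma> True by (simp add: Cm_short)
    next
      case False
      then show ?thesis unfolding d(2) using \<sigma> by (simp add: Cm_simp)
    qed
  qed
qed

lemma sg_sq: "sg P * sg P = (1::'k)" by (simp add: sg_def)

lemma gr10: "Suc a < n \<Longrightarrow> Suc b < n \<Longrightarrow> a + 1 < b \<or> b + 1 < a \<Longrightarrow>
   gr (fa_lin [(1, [GT a, GT b, GE \<nu>]),
        (- sg (\<nu> ! a \<in> Iodd \<and> \<nu> ! (a+1) \<in> Iodd \<and> \<nu> ! b \<in> Iodd \<and> \<nu> ! (b+1) \<in> Iodd), [GT b, GT a, GE \<nu>])])"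
proof (rule gr_fa_lin)
  assume an: "Suc a < n" and bn: "Suc b < n" and ab: "a + 1 < b \<or> b + 1 < a"
  fix \<sigma> \<sigma>' assume \<sigma>: "\<sigma> \<in> S"
  let ?P = "\<nu> ! a \<in> Iodd \<and> \<nu> ! (a+1) \<in> Iodd \<and> \<nu> ! b \<in> Iodd \<and> \<nu> ! (b+1) \<in> Iodd"
  show "sum_list (map (\<lambda>(c, u). c * Cm u \<sigma>' \<sigma>) [(1, [GT a, GT b, GE \<nu>]), (- sg ?P, [GT b, GT a, GE \<nu>])]) = 0"
  proof (cases "\<sigma> = \<nu>")
    case False then show ?thesis by (simp add: Cm_simp)
  next
    case True
    have la: "Suc a < length \<nu>" and lb: "Suc b < length \<nu>" using S_len \<sigma> True an bn by auto
    have sw: "swp a (swp b \<nu>) = swp b (swp a \<nu>)"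
      using ab swp_comm[OF la lb] swp_comm[OF lb la] by auto
    have key: "cc a (swp b \<nu>) * cc b \<nu> = sg ?P * (cc b (swp a \<nu>) * cc a \<nu>)"
    proof (cases "a + 1 < b")
      case True
      then show ?thesis using cc_square[of \<nu> a b] \<sigma> \<open>\<sigma> = \<nu>\<close> lb by (simp add: sg_def)
    next
      case False
      then have ba: "Suc b < a" using ab by simp
      have e: "cc b (swp a \<nu>) * cc a \<nu> = sg ?P * (cc a (swp b \<nu>) * cc b \<nu>)"
        using cc_square[of \<nu> b a] \<sigma> \<open>\<sigma> = \<nu>\<close> la ba by (simp add: sg_def conj_ac)
      have "sg ?P * (cc b (swp a \<nu>) * cc a \<nu>) = (sg ?P * sg ?P) * (cc a (swp b \<nu>) * cc b \<nu>)"
        unfolding e by (simp only: mult.assoc)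
      then show ?thesis by (simp add: sg_sq)
    qed
    show ?thesis using \<sigma> True key sw by (simp add: Cm_simp mult.assoc)
  qed
qed

lemma Beven_xf: "xfree w \<Longrightarrow> Beven t i j a \<nu> w \<noteq> 0 \<Longrightarrow> w = [GE \<nu>]"
proof (rule ccontr)
  assume xw: "xfree w" and nz: "Beven t i j a \<nu> w \<noteq> 0" and ne: "w \<noteq> [GE \<nu>]"
  have "Beven t i j a \<nu> w = 0"
    unfolding Beven_def
  proof (intro sum.neutral ballI)
    fix r s k
    show "(if w = replicate k (GX (a+2)) @ replicate (r - 1 - k) (GX a) @ replicate s (GX (a+1)) @ [GE \<nu>]
      then t i j r s else 0) = 0"
    proof (cases "w = replicate k (GX (a+2)) @ replicate (r - 1 - k) (GX a) @ replicate s (GX (a+1)) @ [GE \<nu>]")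
      case True
      then have "k = 0 \<and> r - 1 - k = 0 \<and> s = 0" using xw xfree_rep by (metis append.assoc xfree_simps(3))
      then show ?thesis using True ne by simp
    qed simp
  qed
  then show False using nz by simp
qed

lemma gr_zero: "gr (\<lambda>_. 0)"
  by (simp add: gr_def XF_def Phi_def)

lemma gr_brhs: "Suc (Suc a) < n \<Longrightarrow> gr (braid_rhs Iodd t a \<nu>)"
proof (cases "\<nu> \<in> S")
  case True
  assume an: "Suc (Suc a) < n"
  have "\<nu> ! a \<noteq> \<nu> ! (a+2)" using S_neq[OF True, of a "a+2"] S_len[OF True] an by simp
  then have "braid_rhs Iodd t a \<nu> = (\<lambda>_. 0)" by (simp add: braid_rhs_def)
  then show ?thesis using gr_zero by simp
next
  case False
  have ev: "gr (Beven t i j a \<nu>)" for i j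
  proof -
    have sub: "XF (Beven t i j a \<nu>) \<subseteq> {[GE \<nu>]}" using Beven_xf by (auto simp: XF_def)
    have "Phi (Beven t i j a \<nu>) \<sigma>' \<sigma> = (\<Sum>w\<in>{[GE \<nu>]}. Beven t i j a \<nu> w * Cm w \<sigma>' \<sigma>)" for \<sigma>' \<sigma>
      by (rule Phi_eq) (use sub in auto)
    then show ?thesis unfolding gr_def using finite_subset[OF sub] False by (auto simp: Cm_simp)
  qed
  have od: "gr (\<lambda>w. c * fa_mult (fa_lin [(1, [GX (a+2)]), (- 1, [GX a])]) g w)" for c g
  proof -
    have "XF (\<lambda>w. c * fa_mult (fa_lin [(1, [GX (a+2)]), (- 1, [GX a])]) g w :: 'k) = {}"
    proof -
      have "fa_mult (fa_lin [(1, [GX (a+2)]), (- 1, [GX a])]) g w = 0" if xw: "xfree w" for w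
        unfolding fa_mult_def
      proof (intro sum.neutral ballI)
        fix i
        have "xfree (take i w)" using xw by (rule xfree_take)
        then have "fa_lin [(1, [GX (a+2)]), (- 1, [GX a])] (take i w) = (0::'k)"
          by (auto simp: fa_lin_Cons fa_lin_Nil)
        then show "fa_lin [(1, [GX (a+2)]), (- 1, [GX a])] (take i w) * g (drop i w) = 0" by simp
      qed
      then show ?thesis by (auto simp: XF_def)
    qed
    then show ?thesis by (simp add: gr_def Phi_def)
  qed
  show ?thesis unfolding braid_rhs_def using ev od gr_zero by simp
qed

lemma gr11: "a + 2 < n \<Longrightarrow> gr (\<lambda>w. fa_lin [(1, [GT (a+1), GT a, GT (a+1), GE \<nu>]), (- 1, [GT a, GT (a+1), GT a, GE \<nu>])] w
          - braid_rhs Iodd t a \<nu> w)"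
proof -
  assume an: "a + 2 < n"
  let ?f = "fa_lin [(1, [GT (a+1), GT a, GT (a+1), GE \<nu>]), (- 1, [GT a, GT (a+1), GT a, GE \<nu>])] :: ('i,'k) fa"
  have g: "gr (braid_rhs Iodd t a \<nu>)" using gr_brhs an by simp
  have f: "gr ?f"
  proof (rule gr_fa_lin)
    fix \<sigma> \<sigma>' assume \<sigma>: "\<sigma> \<in> S"
    show "sum_list (map (\<lambda>(c, u). c * Cm u \<sigma>' \<sigma>) [(1, [GT (a+1), GT a, GT (a+1), GE \<nu>]), (- 1, [GT a, GT (a+1), GT a, GE \<nu>])]) = 0"
    proof (cases "\<sigma> = \<nu>")
      case False then show ?thesis by (simp add: Cm_simp)
    next
      case True
      have l: "Suc (Suc a) < length \<nu>" using S_len \<sigma> True an by auto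
      show ?thesis using \<sigma> True cc_hex[of \<nu> a] swp_braid[OF l] l by (simp add: Cm_simp mult.assoc)
    qed
  qed
  have d: "finite (XF (\<lambda>w. ?f w - braid_rhs Iodd t a \<nu> w))"
    "\<And>\<sigma>' \<sigma>. Phi (\<lambda>w. ?f w - braid_rhs Iodd t a \<nu> w) \<sigma>' \<sigma> = Phi ?f \<sigma>' \<sigma> - Phi (braid_rhs Iodd t a \<nu>) \<sigma>' \<sigma>"
    using Phi_diff[of ?f "braid_rhs Iodd t a \<nu>"] f g by (auto simp: gr_def)
  show ?thesis using d f g by (simp add: gr_def)
qed

lemma gr_cyc: "0 < n \<Longrightarrow> gr (\<lambda>w. if \<exists>\<nu>\<in>Ib. w = replicate (nat (h (\<nu> ! 0) \<Lambda>)) (GX 0) @ [GE \<nu>] then 1 else (0::'k))"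
proof -
  assume n0: "0 < n"
  let ?Z = "\<lambda>w. if \<exists>\<nu>\<in>Ib. w = replicate (nat (h (\<nu> ! 0) \<Lambda>)) (GX 0) @ [GE \<nu>] then 1 else (0::'k)"
  have sub: "XF ?Z \<subseteq> (\<lambda>\<nu>. [GE \<nu>]) ` Ib"
  proof
    fix w assume "w \<in> XF ?Z"
    then obtain \<nu> where \<nu>: "\<nu> \<in> Ib" "w = replicate (nat (h (\<nu> ! 0) \<Lambda>)) (GX 0) @ [GE \<nu>]" and xw: "xfree w"
      by (auto simp: XF_def split: if_splits)
    then have "nat (h (\<nu> ! 0) \<Lambda>) = 0" using xfree_rep by blast
    then show "w \<in> (\<lambda>\<nu>. [GE \<nu>]) ` Ib" using \<nu> by simp
  qed
  have fin: "finite ((\<lambda>\<nu>. [GE \<nu>]) ` Ib)" using finIb by simp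
  have "Phi ?Z \<sigma>' \<sigma> = 0" if \<sigma>: "\<sigma> \<in> S" for \<sigma>' \<sigma>
  proof -
    have "Phi ?Z \<sigma>' \<sigma> = (\<Sum>w\<in>(\<lambda>\<nu>. [GE \<nu>]) ` Ib. ?Z w * Cm w \<sigma>' \<sigma>)" by (rule Phi_eq[OF fin sub])
    also have "\<dots> = 0"
    proof (intro sum.neutral ballI)
      fix w assume "w \<in> (\<lambda>\<nu>. [GE \<nu>]) ` Ib"
      then obtain \<nu> where w: "w = [GE \<nu>]" by auto
      show "?Z w * Cm w \<sigma>' \<sigma> = 0"
      proof (cases "\<nu> = \<sigma>")
        case False then show ?thesis using w \<sigma> by (simp add: Cm_short)
      next
        case True
        have pos: "0 < h (\<sigma> ! 0) \<Lambda>" using S_cyc[OF \<sigma> n0] .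
        have "\<not> (\<exists>\<nu>'\<in>Ib. [GE \<sigma>] = replicate (nat (h (\<nu>' ! 0) \<Lambda>)) (GX 0) @ [GE \<nu>'])"
        proof
          assume "\<exists>\<nu>'\<in>Ib. [GE \<sigma>] = replicate (nat (h (\<nu>' ! 0) \<Lambda>)) (GX 0) @ [GE \<nu>']"
          then obtain \<nu>' where e: "[GE \<sigma>] = replicate (nat (h (\<nu>' ! 0) \<Lambda>)) (GX 0) @ [GE \<nu>']" by blast
          then have "nat (h (\<nu>' ! 0) \<Lambda>) = 0" by (cases "nat (h (\<nu>' ! 0) \<Lambda>)") auto
          then have "\<nu>' = \<sigma>" "nat (h (\<nu>' ! 0) \<Lambda>) = 0" using e by auto
          then show False using pos by simp
        qed
        then show ?thesis using w True by auto
      qed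
    qed
    finally show ?thesis .
  qed
  then show ?thesis unfolding gr_def using finite_subset[OF sub fin] by simp
qed


lemma gr_rels: "r \<in> relsR Iodd t Ib n \<Longrightarrow> gr r"
  unfolding relsR_def
  by (elim UnE) (blast intro: gr1 gr2 gr3 gr4 gr5 gr6 gr7 gr8 gr9 gr10 gr11)+

lemma gr_cycs: "r \<in> relsCyc h \<Lambda> Ib n \<Longrightarrow> gr r"
  unfolding relsCyc_def by (auto split: if_splits intro: gr_cyc)

lemma ideal_gr: "in_ideal (fa_elem Ib n) (relsR Iodd t Ib n \<union> relsCyc h \<Lambda> Ib n) f \<Longrightarrow> gr f"
proof (induction rule: in_ideal.induct)
  case (gen s)
  then show ?case using gr_rels gr_cycs by blast
next
  case zero
  then show ?case using gr_zero by simp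
next
  case (add f g)
  then show ?case using Phi_add unfolding gr_def by simp
next
  case (smult f c)
  then show ?case using Phi_smult unfolding gr_def by simp
next
  case (lmult a f)
  have fa: "finite (XF a)"
    using lmult.hyps(1) unfolding fa_elem_def XF_def by (auto intro: finite_subset)
  have ff: "finite (XF f)" using lmult.IH unfolding gr_def by simp
  show ?case unfolding gr_def
  proof (intro conjI allI impI)
    show "finite (XF (fa_mult a f))" using Phi_mult[OF fa ff] by simp
    fix \<sigma> \<sigma>' assume \<sigma>: "\<sigma> \<in> S"
    have "Phi (fa_mult a f) \<sigma>' \<sigma> = (\<Sum>\<rho>\<in>S. Phi a \<sigma>' \<rho> * Phi f \<rho> \<sigma>)" using Phi_mult[OF fa ff] by simp
    also have "\<dots> = 0" using lmult.IH \<sigma> unfolding gr_def by simp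
    finally show "Phi (fa_mult a f) \<sigma>' \<sigma> = 0" .
  qed
next
  case (rmult a f)
  have fa: "finite (XF a)"
    using rmult.hyps(1) unfolding fa_elem_def XF_def by (auto intro: finite_subset)
  have ff: "finite (XF f)" using rmult.IH unfolding gr_def by simp
  show ?case unfolding gr_def
  proof (intro conjI allI impI)
    show "finite (XF (fa_mult f a))" using Phi_mult[OF ff fa] by simp
    fix \<sigma> \<sigma>' assume \<sigma>: "\<sigma> \<in> S"
    have "Phi (fa_mult f a) \<sigma>' \<sigma> = (\<Sum>\<rho>\<in>S. Phi f \<sigma>' \<rho> * Phi a \<rho> \<sigma>)" using Phi_mult[OF ff fa] by simp
    also have "\<dots> = 0" using rmult.IH unfolding gr_def by simp
    finally show "Phi (fa_mult f a) \<sigma>' \<sigma> = 0" .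
  qed
qed

lemma nonzero_step:
  assumes \<sigma>: "\<sigma> \<in> S" and s2: "swp b \<sigma> \<in> S" and b: "Suc b < n"
    and al: "allowed A X Y (\<sigma> ! b) (\<sigma> ! Suc b)"
  shows "\<not> in_ideal (fa_elem Ib n) (relsR Iodd t Ib n \<union> relsCyc h \<Lambda> Ib n)
           (fa_mult (fa_mult (idem (swp b \<sigma>)) (ind [GT b])) (idem \<sigma>))"
proof
  assume "in_ideal (fa_elem Ib n) (relsR Iodd t Ib n \<union> relsCyc h \<Lambda> Ib n)
           (fa_mult (fa_mult (idem (swp b \<sigma>)) (ind [GT b])) (idem \<sigma>))"
  then have g: "gr (ind [GE (swp b \<sigma>), GT b, GE \<sigma>] :: ('i,'k) fa)"
    by (simp add: idem_ind fa_mult_ind_ind ideal_gr)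
  have l: "Suc b < length \<sigma>" using S_len[OF \<sigma>] b by simp
  have "Phi (ind [GE (swp b \<sigma>), GT b, GE \<sigma>] :: ('i,'k) fa) (swp b \<sigma>) \<sigma> = cc b \<sigma>"
    using Phi_ind \<sigma> by (simp add: Cm_simp)
  moreover have "cc b \<sigma> \<noteq> 0"
  proof -
    have I: "\<sigma> ! b \<in> I" "\<sigma> ! Suc b \<in> I" using S_in_I[OF \<sigma>] l by auto
    have ne: "\<sigma> ! b \<noteq> \<sigma> ! Suc b" using S_neq[OF \<sigma>] l by simp
    have "kap A t rk (\<sigma> ! b) (\<sigma> ! Suc b) \<noteq> 0" using t_orth[OF I ne] by (simp add: kap_def)
    moreover have "eps Iodd rk b \<sigma> \<noteq> (0::'k)" by (simp add: eps_def)
    ultimately show ?thesis using \<sigma> s2 l al by (simp add: cc_def2)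
  qed
  ultimately show False using g \<sigma> unfolding gr_def by auto
qed

end

definition rep :: "nat \<Rightarrow> 'a::ab_group_add \<Rightarrow> 'a" where
  "rep m x = (\<Sum>_\<in>{..<m}. x)"

lemma rep_Suc: "rep (Suc m) x = rep m x + x"
  by (simp add: rep_def)

lemma rep_add: "rep (m + k) x = rep m x + rep k x"
  by (induction k) (simp_all add: rep_def add.assoc)

lemma zsc_diff: "zsc (int a - int b) x = rep a x - rep b x"
proof (cases "b \<le> a")
  case True
  then have "a = (a - b) + b" by simp
  then have "rep a x = rep (a - b) x + rep b x" by (metis rep_add)
  moreover have "zsc (int a - int b) x = rep (a - b) x"
  proof -
    have "nat (int a - int b) = a - b" using True by simp
    then show ?thesis using True by (simp add: zsc_def rep_def)
  qed
  ultimately show ?thesis by simp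
next
  case False
  then have "b = (b - a) + a" by simp
  then have "rep b x = rep (b - a) x + rep a x" by (metis rep_add)
  moreover have "zsc (int a - int b) x = - rep (b - a) x"
  proof -
    have "nat (- (int a - int b)) = b - a" using False by simp
    then show ?thesis using False by (simp add: zsc_def rep_def)
  qed
  ultimately show ?thesis by simp
qed

lemma sum_list_count: "finite F \<Longrightarrow> set xs \<subseteq> F \<Longrightarrow>
  sum_list (map \<alpha> xs) = (\<Sum>i\<in>F. rep (count_list xs i) (\<alpha> i :: 'a::ab_group_add))"
proof (induction xs)
  case Nil then show ?case by (simp add: rep_def)
next
  case (Cons x xs)
  have xF: "x \<in> F" using Cons.prems by simp
  have "(\<Sum>i\<in>F. rep (count_list (x # xs) i) (\<alpha> i)) = (\<Sum>i\<in>F. rep (count_list xs i) (\<alpha> i) + (if i = x then \<alpha> i else 0))"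
    by (rule sum.cong) (auto simp: rep_Suc)
  also have "\<dots> = (\<Sum>i\<in>F. rep (count_list xs i) (\<alpha> i)) + \<alpha> x"
    using xF Cons.prems(1) by (simp add: sum.distrib)
  finally show ?case using Cons by (simp add: add.commute)
qed

lemma Ibeta_perm:
  assumes ind: "zlin_indep I \<alpha>" and js: "set js \<subseteq> I" "distinct js"
    and \<sigma>: "\<sigma> \<in> Ibeta I \<alpha> (sum_list (map \<alpha> js))"
  shows "distinct \<sigma> \<and> set \<sigma> = set js \<and> length \<sigma> = length js"
proof -
  have sI: "set \<sigma> \<subseteq> I" and ss: "sum_list (map \<alpha> \<sigma>) = sum_list (map \<alpha> js)"
    using \<sigma> by (auto simp: Ibeta_def)
  let ?F = "set \<sigma> \<union> set js"
  have fin: "finite ?F" by simp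
  let ?c = "\<lambda>i. int (count_list \<sigma> i) - int (count_list js i)"
  have "(\<Sum>i\<in>?F. zsc (?c i) (\<alpha> i)) = (\<Sum>i\<in>?F. rep (count_list \<sigma> i) (\<alpha> i)) - (\<Sum>i\<in>?F. rep (count_list js i) (\<alpha> i))"
    by (simp add: zsc_diff sum_subtractf)
  also have "\<dots> = sum_list (map \<alpha> \<sigma>) - sum_list (map \<alpha> js)"
    using sum_list_count[OF fin, of \<sigma> \<alpha>] sum_list_count[OF fin, of js \<alpha>] by simp
  also have "\<dots> = 0" using ss by simp
  finally have s0: "(\<Sum>i\<in>?F. zsc (?c i) (\<alpha> i)) = 0" .
  have H: "\<forall>F c. finite F \<longrightarrow> F \<subseteq> I \<longrightarrow> (\<Sum>i\<in>F. zsc (c i) (\<alpha> i)) = 0 \<longrightarrow> (\<forall>i\<in>F. c i = 0)"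
    using ind unfolding zlin_indep_def .
  have FI: "?F \<subseteq> I" using sI js(1) by simp
  have c0: "\<forall>i\<in>?F. ?c i = 0"
    using H[rule_format, of ?F ?c, OF fin FI s0] by blast
  have cnt: "count_list \<sigma> i = count_list js i" for i
  proof (cases "i \<in> ?F")
    case True then show ?thesis using c0 by auto
  next
    case False then show ?thesis by simp
  qed
  have set: "set \<sigma> = set js" using cnt by (metis count_list_0_iff subsetI subset_antisym)
  have len: "length \<sigma> = length js"
  proof -
    have "length \<sigma> = sum (count_list \<sigma>) ?F" using sum_count_set[of \<sigma> ?F] by simp
    also have "\<dots> = sum (count_list js) ?F" using cnt by simp
    also have "\<dots> = length js" using sum_count_set[of js ?F] by simp
    finally show ?thesis .
  qed
  have "card (set \<sigma>) = length \<sigma>" using set len distinct_card[OF js(2)] by simp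
  then have "distinct \<sigma>" by (rule card_distinct)
  then show ?thesis using set len by simp
qed

lemma Ibeta_finite:
  assumes ind: "zlin_indep I \<alpha>" and js: "set js \<subseteq> I" "distinct js"
  shows "finite (Ibeta I \<alpha> (sum_list (map \<alpha> js)))"
proof -
  have "Ibeta I \<alpha> (sum_list (map \<alpha> js)) \<subseteq> {xs. set xs \<subseteq> set js \<and> length xs = length js}"
    using Ibeta_perm[OF ind js] by auto
  moreover have "finite {xs. set xs \<subseteq> set js \<and> length xs = length js}"
    by (rule finite_lists_length_eq) simp
  ultimately show ?thesis by (rule finite_subset)
qed

lemma fa_mult_sum_left: "finite B \<Longrightarrow> fa_mult (\<lambda>w. \<Sum>x\<in>B. F x w) g = (\<lambda>w. \<Sum>x\<in>B. fa_mult (F x) g w)"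
  unfolding fa_mult_def by (auto simp: sum_distrib_right fun_eq_iff intro: sum.swap)

lemma sum_ind_inj: "finite B \<Longrightarrow> inj_on W B \<Longrightarrow>
  (\<lambda>w. if \<exists>\<nu>\<in>B. w = W \<nu> then 1 else 0) = (\<lambda>w. \<Sum>\<nu>\<in>B. ind (W \<nu>) w :: 'k::field)"
proof
  fix w
  assume fin: "finite B" and inj: "inj_on W B"
  show "(if \<exists>\<nu>\<in>B. w = W \<nu> then 1 else 0) = (\<Sum>\<nu>\<in>B. ind (W \<nu>) w :: 'k)"
  proof (cases "\<exists>\<nu>\<in>B. w = W \<nu>")
    case True
    then obtain \<nu>0 where \<nu>0: "\<nu>0 \<in> B" "w = W \<nu>0" by blast
    have "(\<Sum>\<nu>\<in>B. ind (W \<nu>) w :: 'k) = (\<Sum>\<nu>\<in>B. if \<nu> = \<nu>0 then 1 else 0)"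
      by (rule sum.cong) (use \<nu>0 inj in \<open>auto simp: ind_def inj_on_def\<close>)
    then show ?thesis using True \<nu>0 fin by simp
  next
    case False
    then show ?thesis by (auto simp: ind_def intro!: sum.neutral[symmetric])
  qed
qed

lemma fa_mult_ind_lin: "fa_mult (ind u) (fa_lin xs) = fa_lin (map (\<lambda>(c,v). (c, u @ v)) xs)"
proof (induction xs)
  case Nil
  then show ?case by (simp add: fa_mult_ind_left fa_lin_Nil)
next
  case (Cons p xs)
  obtain c v where p: "p = (c,v)" by (cases p)
  have "fa_mult (ind u) (fa_lin (p # xs)) = (\<lambda>w. (if w = u @ v then c else 0) + fa_mult (ind u) (fa_lin xs) w)"
    unfolding fa_mult_ind_left p fa_lin_Cons by (auto simp: fun_eq_iff append_eq_conv_conj) (metis append_take_drop_id)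
  then show ?case using Cons by (simp add: p fa_lin_Cons)
qed

lemma fa_mult_lin_ind: "fa_mult (fa_lin xs) (ind u) = fa_lin (map (\<lambda>(c,v). (c, v @ u)) xs)"
proof (induction xs)
  case Nil
  then show ?case by (simp add: fa_mult_ind_right fa_lin_Nil)
next
  case (Cons p xs)
  obtain c v where p: "p = (c,v)" by (cases p)
  have e: "(v @ u = w) \<longleftrightarrow> (length u \<le> length w \<and> drop (length w - length u) w = u \<and> take (length w - length u) w = v)" for w
  proof
    assume "v @ u = w" then show "length u \<le> length w \<and> drop (length w - length u) w = u \<and> take (length w - length u) w = v" by auto
  next
    assume "length u \<le> length w \<and> drop (length w - length u) w = u \<and> take (length w - length u) w = v"
    then show "v @ u = w" by (metis append_take_drop_id)
  qed
  have "fa_mult (fa_lin (p # xs)) (ind u) = (\<lambda>w. (if w = v @ u then c else 0) + fa_mult (fa_lin xs) (ind u) w)"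
    unfolding fa_mult_ind_right p fa_lin_Cons using e by (auto simp: fun_eq_iff) (metis append_take_drop_id)
  then show ?case using Cons by (simp add: p fa_lin_Cons)
qed


fun good :: "('i \<Rightarrow> 'i \<Rightarrow> int) \<Rightarrow> ('i \<Rightarrow> int) \<Rightarrow> 'i list \<Rightarrow> bool" where
  "good A wt [] = True"
| "good A wt (x # xs) = (0 < wt x \<and> good A (\<lambda>z. wt z - A z x) xs)"

definition Wt :: "('i \<Rightarrow> 'i \<Rightarrow> int) \<Rightarrow> ('i \<Rightarrow> int) \<Rightarrow> 'i list \<Rightarrow> 'i \<Rightarrow> int" where
  "Wt A wt l = (\<lambda>z. wt z - sum_list (map (A z) l))"

lemma Wt_Nil[simp]: "Wt A wt [] = wt" by (simp add: Wt_def fun_eq_iff)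

lemma Wt_Cons: "Wt A wt (x # l) = Wt A (\<lambda>z. wt z - A z x) l"
  by (simp add: Wt_def fun_eq_iff algebra_simps)

lemma good_append: "good A wt (l @ r) = (good A wt l \<and> good A (Wt A wt l) r)"
  by (induction l arbitrary: wt) (auto simp: Wt_Cons)

lemma good_orth: "good A wt (q @ x # y # r) \<Longrightarrow> A x y = 0 \<Longrightarrow> A y x = 0 \<Longrightarrow> good A wt (q @ y # x # r)"
  by (simp add: good_append algebra_simps)

lemma good_left: "good A wt (q @ y # x # r) \<Longrightarrow> 0 < Wt A wt q x \<Longrightarrow> A y x \<le> 0 \<Longrightarrow> good A wt (q @ x # y # r)"
  by (simp add: good_append algebra_simps)

lemma sum_list_nonpos': "(\<forall>z\<in>set l. f z \<le> (0::int)) \<Longrightarrow> sum_list (map f l) \<le> 0"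
  by (induction l) auto

lemma Wt_mono: "(\<forall>z\<in>set l. A x z \<le> 0) \<Longrightarrow> Wt A wt p x \<le> Wt A wt (p @ l) x"
  using sum_list_nonpos'[of l "A x"] by (simp add: Wt_def)

lemma bad_find:
  "\<not> good A wt \<rho> \<Longrightarrow> (\<forall>z\<in>set \<rho>. 0 \<le> wt z) \<Longrightarrow> distinct \<rho> \<Longrightarrow>
   (\<forall>x\<in>set \<rho>. \<forall>y\<in>set \<rho>. x \<noteq> y \<longrightarrow> A x y \<le> 0) \<Longrightarrow>
   \<exists>p x q. \<rho> = p @ x # q \<and> wt x = 0 \<and> (\<forall>y\<in>set p. A x y = 0)"
proof (induction \<rho> arbitrary: wt)
  case Nil then show ?case by simp
next
  case (Cons y \<rho>)
  show ?case
  proof (cases "0 < wt y")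
    case False
    then have "wt y = 0" using Cons.prems(2) by fastforce
    then show ?thesis by (intro exI[of _ "[]"]) auto
  next
    case True
    let ?wt = "\<lambda>z. wt z - A z y"
    have ng: "\<not> good A ?wt \<rho>" using Cons.prems(1) True by simp
    have nn: "\<forall>z\<in>set \<rho>. 0 \<le> ?wt z"
    proof
      fix z assume z: "z \<in> set \<rho>"
      have "z \<noteq> y" using Cons.prems(3) z by auto
      then have "A z y \<le> 0" using Cons.prems(4) z by simp
      moreover have "0 \<le> wt z" using Cons.prems(2) z by simp
      ultimately show "0 \<le> ?wt z" by simp
    qed
    obtain p x q where pxq: "\<rho> = p @ x # q" "?wt x = 0" "\<forall>y\<in>set p. A x y = 0"
      using Cons.IH[OF ng nn] Cons.prems(3,4) by auto
    have xy: "x \<noteq> y" using Cons.prems(3) pxq(1) by auto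
    have a: "A x y \<le> 0" using Cons.prems(4) pxq(1) xy by simp
    have w: "0 \<le> wt x" using Cons.prems(2) pxq(1) by simp
    have "wt x = 0" "A x y = 0" using pxq(2) a w by auto
    then show ?thesis using pxq by (intro exI[of _ "y # p"] exI[of _ x] exI[of _ q]) auto
  qed
qed

locale cycl =
  fixes I Iodd :: "'i set" and A :: "'i \<Rightarrow> 'i \<Rightarrow> int" and t :: "'i \<Rightarrow> 'i \<Rightarrow> nat \<Rightarrow> nat \<Rightarrow> 'k::field"
    and h :: "'i \<Rightarrow> 'p \<Rightarrow> int" and \<Lambda> :: 'p and Ib :: "'i list set" and n :: nat
  assumes finIb: "finite Ib"
    and Ib_len: "\<rho> \<in> Ib \<Longrightarrow> length \<rho> = n"
    and Ib_I: "\<rho> \<in> Ib \<Longrightarrow> set \<rho> \<subseteq> I"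
    and Ib_swp: "\<rho> \<in> Ib \<Longrightarrow> Suc b < length \<rho> \<Longrightarrow> swp b \<rho> \<in> Ib"
    and t_orth0: "x \<in> I \<Longrightarrow> y \<in> I \<Longrightarrow> x \<noteq> y \<Longrightarrow> A x y = 0 \<Longrightarrow> t x y 0 0 \<noteq> 0"
    and t_orthrs: "x \<in> I \<Longrightarrow> y \<in> I \<Longrightarrow> A x y = 0 \<Longrightarrow> t x y r s \<noteq> 0 \<Longrightarrow> r = 0 \<and> s = 0"
    and Ib_dist: "\<rho> \<in> Ib \<Longrightarrow> distinct \<rho>"
    and A_off: "x \<in> I \<Longrightarrow> y \<in> I \<Longrightarrow> x \<noteq> y \<Longrightarrow> A x y \<le> 0"
    and A_zero: "x \<in> I \<Longrightarrow> y \<in> I \<Longrightarrow> A x y = 0 \<longleftrightarrow> A y x = 0"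
    and h_nonneg: "x \<in> I \<Longrightarrow> 0 \<le> h x \<Lambda>"
begin

abbreviation J :: "('i, 'k) fa \<Rightarrow> bool" where
  "J \<equiv> in_ideal (fa_elem Ib n) (relsR Iodd t Ib n \<union> relsCyc h \<Lambda> Ib n)"

lemma J_rel: "r \<in> relsR Iodd t Ib n \<Longrightarrow> J r"
  by (rule in_ideal.gen) simp

lemma J_lm: "(\<forall>g\<in>set u. valid_gen Ib n g) \<Longrightarrow> J f \<Longrightarrow> J (fa_mult (ind u) f)"
  by (rule in_ideal.lmult) (auto intro: fa_elem_ind)

lemma J_rm: "(\<forall>g\<in>set u. valid_gen Ib n g) \<Longrightarrow> J f \<Longrightarrow> J (fa_mult f (ind u))"
  by (rule in_ideal.rmult) (auto intro: fa_elem_ind)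

lemma cyc_zero:
  assumes n0: "0 < n" and \<rho>: "\<rho> \<in> Ib" and h0: "nat (h (\<rho> ! 0) \<Lambda>) = 0"
  shows "J (idem \<rho>)"
proof -
  define W where "W \<nu> = replicate (nat (h (\<nu> ! 0) \<Lambda>)) (GX 0) @ [GE \<nu>]" for \<nu>
  define X where "X \<nu> = (replicate (nat (h (\<nu> ! 0) \<Lambda>)) (GX (0::nat)) :: 'i gen list)" for \<nu> :: "'i list"
  have injW: "inj_on W Ib" unfolding W_def inj_on_def by auto
  let ?Z = "\<lambda>w. if \<exists>\<nu>\<in>Ib. w = W \<nu> then 1 else (0::'k)"
  have Zc: "?Z \<in> relsCyc h \<Lambda> Ib n" using n0 by (simp add: relsCyc_def W_def)
  have Z: "?Z = (\<lambda>w. \<Sum>\<nu>\<in>Ib. ind (W \<nu>) w)" by (rule sum_ind_inj[OF finIb injW])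
  have vr: "\<forall>g\<in>set [GE \<rho>]. valid_gen Ib n g" using \<rho> by (simp add: valid_gen_def)
  have J1: "J (fa_mult ?Z (ind [GE \<rho>]))"
    by (rule J_rm[OF vr]) (rule in_ideal.gen, use Zc in simp)
  have e1: "fa_mult ?Z (ind [GE \<rho>]) = (\<lambda>w. \<Sum>\<nu>\<in>Ib. ind (X \<nu> @ [GE \<nu>, GE \<rho>]) w)"
    unfolding Z fa_mult_sum_left[OF finIb]
    by (simp add: W_def X_def fa_mult_ind_ind)
  have J2: "J (\<lambda>w. \<Sum>\<nu>\<in>Ib. ind (X \<nu> @ [GE \<nu>, GE \<rho>]) w - (if \<nu> = \<rho> then ind (X \<nu> @ [GE \<rho>]) w else 0))"
  proof (rule in_ideal_sum[OF finIb])
    fix \<nu> assume \<nu>: "\<nu> \<in> Ib"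
    let ?r = "fa_lin ([(1, [GE \<nu>, GE \<rho>])] @ (if \<nu> = \<rho> then [(- 1, [GE \<rho>])] else [])) :: ('i,'k) fa"
    have r: "J ?r" by (rule J_rel) (unfold relsR_def, intro UnI1, use \<nu> \<rho> in blast)
    have vx: "\<forall>g\<in>set (X \<nu>). valid_gen Ib n g" using n0 by (simp add: X_def valid_gen_def)
    have "J (fa_mult (ind (X \<nu>)) ?r)" by (rule J_lm[OF vx r])
    moreover have "fa_mult (ind (X \<nu>)) ?r = (\<lambda>w. ind (X \<nu> @ [GE \<nu>, GE \<rho>]) w - (if \<nu> = \<rho> then ind (X \<nu> @ [GE \<rho>]) w else 0))"
      unfolding fa_mult_ind_lin by (auto simp: fa_lin_Cons fa_lin_Nil fa_lin_append ind_def fun_eq_iff)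
    ultimately show "J (\<lambda>w. ind (X \<nu> @ [GE \<nu>, GE \<rho>]) w - (if \<nu> = \<rho> then ind (X \<nu> @ [GE \<rho>]) w else 0))" by simp
  qed
  have Xr: "X \<rho> = []" using h0 by (simp add: X_def)
  have e2: "(\<lambda>w. \<Sum>\<nu>\<in>Ib. ind (X \<nu> @ [GE \<nu>, GE \<rho>]) w - (if \<nu> = \<rho> then ind (X \<nu> @ [GE \<rho>]) w else (0::'k))) =
            (\<lambda>w. (\<Sum>\<nu>\<in>Ib. ind (X \<nu> @ [GE \<nu>, GE \<rho>]) w) - ind [GE \<rho>] w)"
  proof
    fix w
    have "(\<Sum>\<nu>\<in>Ib. ind (X \<nu> @ [GE \<nu>, GE \<rho>]) w - (if \<nu> = \<rho> then ind (X \<nu> @ [GE \<rho>]) w else 0)) =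
          (\<Sum>\<nu>\<in>Ib. ind (X \<nu> @ [GE \<nu>, GE \<rho>]) w) - (\<Sum>\<nu>\<in>Ib. if \<nu> = \<rho> then ind (X \<nu> @ [GE \<rho>]) w else (0::'k))"
      by (rule sum_subtractf)
    also have "(\<Sum>\<nu>\<in>Ib. if \<nu> = \<rho> then ind (X \<nu> @ [GE \<rho>]) w else (0::'k)) = ind [GE \<rho>] w"
      using sum.delta[OF finIb, of \<rho> "\<lambda>\<nu>. ind (X \<nu> @ [GE \<rho>]) w :: 'k"] \<rho> Xr by simp
    finally show "(\<Sum>\<nu>\<in>Ib. ind (X \<nu> @ [GE \<nu>, GE \<rho>]) w - (if \<nu> = \<rho> then ind (X \<nu> @ [GE \<rho>]) w else (0::'k))) =
          (\<Sum>\<nu>\<in>Ib. ind (X \<nu> @ [GE \<nu>, GE \<rho>]) w) - ind [GE \<rho>] w" .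
  qed
  have "J (\<lambda>w. fa_mult ?Z (ind [GE \<rho>]) w - ((\<Sum>\<nu>\<in>Ib. ind (X \<nu> @ [GE \<nu>, GE \<rho>]) w) - ind [GE \<rho>] w))"
    using in_ideal_diff[OF J1 J2[unfolded e2]] .
  then show ?thesis unfolding e1 idem_ind by simp
qed

lemma orth_step:
  assumes \<rho>: "\<rho> \<in> Ib" and b: "Suc b < n" and z: "A (\<rho> ! b) (\<rho> ! Suc b) = 0"
    and J0: "J (idem (swp b \<rho>))"
  shows "J (idem \<rho>)"
proof -
  have l: "Suc b < length \<rho>" using Ib_len[OF \<rho>] b by simp
  let ?i = "\<rho> ! b" and ?j = "\<rho> ! Suc b"
  have I: "?i \<in> I" "?j \<in> I" using Ib_I[OF \<rho>] l nth_mem[of b \<rho>] nth_mem[OF l] by auto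
  have s\<rho>: "swp b \<rho> \<in> Ib" using Ib_swp[OF \<rho> l] .
  have vt: "\<forall>g\<in>set [GT b]. valid_gen Ib n g" using b by (simp add: valid_gen_def)
  \<comment> \<open>Qel is a scalar multiple of e(rho)\<close>
  have Q: "Qel t ?i ?j b (b+1) \<rho> = (\<lambda>w. t ?i ?j 0 0 * ind [GE \<rho>] w)"
  proof
    fix w
    have "Qel t ?i ?j b (b+1) \<rho> w = (\<Sum>r\<le>length w. \<Sum>s\<le>length w. if r = 0 \<and> s = 0 \<and> w = [GE \<rho>] then t ?i ?j 0 0 else 0)"
      unfolding Qel_def
    proof (intro sum.cong refl)
      fix r s
      show "(if w = replicate r (GX b) @ replicate s (GX (b + 1)) @ [GE \<rho>] then t ?i ?j r s else 0) =
            (if r = 0 \<and> s = 0 \<and> w = [GE \<rho>] then t ?i ?j 0 0 else 0)"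
        using t_orthrs[OF I z, of r s] by auto
    qed
    also have "\<dots> = t ?i ?j 0 0 * ind [GE \<rho>] w" by (simp add: if_distrib sum.delta ind_def)
    finally show "Qel t ?i ?j b (b+1) \<rho> w = t ?i ?j 0 0 * ind [GE \<rho>] w" .
  qed
  have r9: "J (\<lambda>w. ind [GT b, GT b, GE \<rho>] w - t ?i ?j 0 0 * ind [GE \<rho>] w)"
  proof -
    have "J (\<lambda>w. fa_lin [(1, [GT b, GT b, GE \<rho>])] w - Qel t (\<rho> ! b) (\<rho> ! (b+1)) b (b+1) \<rho> w)"
      by (rule J_rel) (use \<rho> b in \<open>unfold relsR_def, blast\<close>)
    then show ?thesis using Q by (simp add: fa_lin_Cons fa_lin_Nil ind_def)
  qed
  have r5: "J (fa_mult (ind [GT b]) (fa_lin [(1, [GT b, GE \<rho>]), (- 1, [GE (swp b \<rho>), GT b])]))"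
    by (rule J_lm[OF vt], rule J_rel) (use \<rho> b in \<open>unfold relsR_def, blast\<close>)
  have e5: "fa_mult (ind [GT b]) (fa_lin [(1, [GT b, GE \<rho>]), (- 1, [GE (swp b \<rho>), GT b])]) =
     (\<lambda>w. ind [GT b, GT b, GE \<rho>] w - ind [GT b, GE (swp b \<rho>), GT b] w :: 'k)"
    unfolding fa_mult_ind_lin by (auto simp: fa_lin_Cons fa_lin_Nil ind_def fun_eq_iff)
  have r3: "J (ind [GT b, GE (swp b \<rho>), GT b])"
  proof -
    have "J (fa_mult (fa_mult (ind [GT b]) (idem (swp b \<rho>))) (ind [GT b]))"
      by (rule J_rm[OF vt], rule J_lm[OF vt J0])
    then show ?thesis by (simp add: idem_ind fa_mult_ind_ind)
  qed
  have "J (\<lambda>w. (ind [GT b, GT b, GE \<rho>] w - ind [GT b, GE (swp b \<rho>), GT b] w) + ind [GT b, GE (swp b \<rho>), GT b] w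
           - (ind [GT b, GT b, GE \<rho>] w - t ?i ?j 0 0 * ind [GE \<rho>] w))"
    by (rule in_ideal_diff[OF in_ideal.add[OF r5[unfolded e5] r3] r9])
  then have "J (\<lambda>w. t ?i ?j 0 0 * ind [GE \<rho>] w)" by simp
  then have "J (\<lambda>w. inverse (t ?i ?j 0 0) * (t ?i ?j 0 0 * ind [GE \<rho>] w))" by (rule in_ideal.smult)
  moreover have "t ?i ?j 0 0 \<noteq> 0"
  proof (rule t_orth0[OF I _ z])
    show "?i \<noteq> ?j" using Ib_dist[OF \<rho>] l by (simp add: nth_eq_iff_index_eq)
  qed
  ultimately show ?thesis
  proof -
    assume j: "J (\<lambda>w. inverse (t ?i ?j 0 0) * (t ?i ?j 0 0 * ind [GE \<rho>] w))" and c: "t ?i ?j 0 0 \<noteq> 0"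
    have "(\<lambda>w. inverse (t ?i ?j 0 0) * (t ?i ?j 0 0 * ind [GE \<rho>] w)) = ind [GE \<rho>]"
      using c by (simp add: fun_eq_iff mult.assoc[symmetric])
    then show ?thesis using j by (simp add: idem_ind)
  qed
qed


abbreviation wt0 :: "'i \<Rightarrow> int" where "wt0 \<equiv> \<lambda>z. h z \<Lambda>"

lemma bubble: "p @ x # q \<in> Ib \<Longrightarrow> (\<forall>y\<in>set p. A y x = 0) \<Longrightarrow>
   x # p @ q \<in> Ib \<and> (J (idem (x # p @ q)) \<longrightarrow> J (idem (p @ x # q)))"
proof (induction p arbitrary: q rule: rev_induct)
  case Nil then show ?case by simp
next
  case (snoc y p)
  let ?\<rho> = "p @ y # x # q" and ?b = "length p"
  have \<rho>: "?\<rho> \<in> Ib" using snoc.prems(1) by simp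
  have l: "Suc ?b < length ?\<rho>" by simp
  have sw: "swp ?b ?\<rho> = p @ x # y # q" by (rule swp_append)
  have s\<rho>: "p @ x # (y # q) \<in> Ib" using Ib_swp[OF \<rho> l] sw by simp
  have IH: "x # p @ y # q \<in> Ib \<and> (J (idem (x # p @ y # q)) \<longrightarrow> J (idem (p @ x # y # q)))"
    using snoc.IH[OF s\<rho>] snoc.prems(2) by simp
  have bn: "Suc ?b < n" using Ib_len[OF \<rho>] by simp
  have z: "A (?\<rho> ! ?b) (?\<rho> ! Suc ?b) = 0" using snoc.prems(2) by (simp add: nth_append)
  have "J (idem (p @ x # y # q)) \<Longrightarrow> J (idem ?\<rho>)"
    using orth_step[OF \<rho> bn z] sw by simp
  then show ?case using IH by simp
qed

lemma bad_zero:
  assumes n0: "0 < n" and \<rho>: "\<rho> \<in> Ib" and bad: "\<not> good A wt0 \<rho>"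
  shows "J (idem \<rho>)"
proof -
  have sI: "set \<rho> \<subseteq> I" using Ib_I[OF \<rho>] .
  obtain p x q where pxq: "\<rho> = p @ x # q" "h x \<Lambda> = 0" "\<forall>y\<in>set p. A x y = 0"
    using bad_find[OF bad] sI h_nonneg Ib_dist[OF \<rho>] A_off by (metis subsetD)
  have "\<forall>y\<in>set p. A y x = 0" using pxq A_zero sI by auto
  then have b: "x # p @ q \<in> Ib \<and> (J (idem (x # p @ q)) \<longrightarrow> J (idem (p @ x # q)))"
    using bubble \<rho> pxq(1) by simp
  have "J (idem (x # p @ q))" using cyc_zero[OF n0, of "x # p @ q"] b pxq(2) by simp
  then show ?thesis using b pxq(1) by simp
qed

definition Rg :: "'i list \<Rightarrow> 'i list \<Rightarrow> bool" where
  "Rg a b \<longleftrightarrow> a \<in> Ib \<and> good A wt0 a \<and> b \<in> Ib \<and> good A wt0 b \<and> (\<exists>bb. Suc bb < length b \<and> a = swp bb b)"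

lemma move_left:
  "p @ s1 @ x # s2 \<in> Ib \<Longrightarrow> good A wt0 (p @ s1 @ x # s2) \<Longrightarrow> 0 < Wt A wt0 p x \<Longrightarrow>
   Rg\<^sup>*\<^sup>* (p @ s1 @ x # s2) (p @ x # s1 @ s2) \<and> p @ x # s1 @ s2 \<in> Ib \<and> good A wt0 (p @ x # s1 @ s2)"
proof (induction s1 arbitrary: s2 rule: rev_induct)
  case Nil then show ?case by simp
next
  case (snoc y s1)
  let ?a0 = "(p @ s1) @ y # x # s2" and ?a1 = "(p @ s1) @ x # y # s2" and ?bb = "length (p @ s1)"
  have a0: "?a0 \<in> Ib" "good A wt0 ?a0" using snoc.prems(1,2) by simp_all
  have sI: "set ?a0 \<subseteq> I" using Ib_I[OF a0(1)] .
  have d: "distinct ?a0" using Ib_dist[OF a0(1)] .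
  have l: "Suc ?bb < length ?a0" by simp
  have sw: "swp ?bb ?a0 = ?a1" by (rule swp_append)
  have sw2: "swp ?bb ?a1 = ?a0" by (rule swp_append)
  have a1I: "?a1 \<in> Ib" using Ib_swp[OF a0(1) l] sw by simp
  have xs1: "\<forall>z\<in>set s1. A x z \<le> 0" using A_off sI d by auto
  have "Wt A wt0 p x \<le> Wt A wt0 (p @ s1) x" using Wt_mono[of s1 A x wt0 p] xs1 by blast
  then have wx: "0 < Wt A wt0 (p @ s1) x" using snoc.prems(3) by simp
  have yx: "A y x \<le> 0" using A_off sI d by auto
  have a1g: "good A wt0 ?a1" by (rule good_left[OF a0(2) wx yx])
  have step: "Rg ?a0 ?a1" unfolding Rg_def using a0 a1I a1g sw2 by (metis l swp_length)
  have IH: "Rg\<^sup>*\<^sup>* (p @ s1 @ x # y # s2) (p @ x # s1 @ y # s2) \<and> p @ x # s1 @ y # s2 \<in> Ib \<and> good A wt0 (p @ x # s1 @ y # s2)"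
    using snoc.IH[of "y # s2"] a1I a1g snoc.prems(3) by simp
  show ?case using step IH by (simp add: converse_rtranclp_into_rtranclp)
qed

lemma chain: "p @ \<sigma> \<in> Ib \<Longrightarrow> p @ \<nu> \<in> Ib \<Longrightarrow> set \<sigma> = set \<nu> \<Longrightarrow> good A wt0 (p @ \<sigma>) \<Longrightarrow> good A wt0 (p @ \<nu>) \<Longrightarrow>
   Rg\<^sup>*\<^sup>* (p @ \<sigma>) (p @ \<nu>)"
proof (induction \<nu> arbitrary: p \<sigma>)
  case Nil then show ?case by simp
next
  case (Cons x \<nu>)
  have "x \<in> set \<sigma>" using Cons.prems(3) by simp
  then obtain s1 s2 where \<sigma>: "\<sigma> = s1 @ x # s2" by (meson split_list)
  have gx: "0 < Wt A wt0 p x" using Cons.prems(5) by (simp add: good_append)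
  have ml: "Rg\<^sup>*\<^sup>* (p @ s1 @ x # s2) (p @ x # s1 @ s2) \<and> p @ x # s1 @ s2 \<in> Ib \<and> good A wt0 (p @ x # s1 @ s2)"
    using move_left[OF _ _ gx] Cons.prems(1,4) \<sigma> by simp
  have d1: "distinct (p @ \<sigma>)" using Ib_dist[OF Cons.prems(1)] .
  have d2: "distinct (p @ x # \<nu>)" using Ib_dist[OF Cons.prems(2)] .
  have st: "set (s1 @ s2) = set \<nu>" using Cons.prems(3) d1 d2 \<sigma> by auto
  have "Rg\<^sup>*\<^sup>* ((p @ [x]) @ (s1 @ s2)) ((p @ [x]) @ \<nu>)"
    by (rule Cons.IH) (use ml st Cons.prems(2,5) in simp_all)
  then show ?case using ml \<sigma> by (auto intro: rtranclp_trans)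
qed

lemma chain_list: "Rg\<^sup>*\<^sup>* a b \<Longrightarrow> a \<in> Ib \<and> good A wt0 a \<Longrightarrow>
  \<exists>seq. seq \<noteq> [] \<and> hd seq = a \<and> last seq = b \<and> (\<forall>\<rho>\<in>set seq. \<rho> \<in> Ib \<and> good A wt0 \<rho>) \<and>
    (\<forall>k. Suc k < length seq \<longrightarrow> Rg (seq ! k) (seq ! Suc k))"
proof (induction rule: converse_rtranclp_induct)
  case base
  then show ?case by (intro exI[of _ "[b]"]) auto
next
  case (step a a')
  have "a' \<in> Ib \<and> good A wt0 a'" using step.hyps(1) by (simp add: Rg_def)
  then obtain seq where seq: "seq \<noteq> []" "hd seq = a'" "last seq = b" "\<forall>\<rho>\<in>set seq. \<rho> \<in> Ib \<and> good A wt0 \<rho>"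
    "\<forall>k. Suc k < length seq \<longrightarrow> Rg (seq ! k) (seq ! Suc k)" using step.IH by blast
  show ?case
  proof (intro exI[of _ "a # seq"] conjI allI impI)
    show "a # seq \<noteq> []" by simp
    show "hd (a # seq) = a" by simp
    show "last (a # seq) = b" using seq by simp
    show "\<forall>\<rho>\<in>set (a # seq). \<rho> \<in> Ib \<and> good A wt0 \<rho>" using seq step.prems by simp
    fix k assume k: "Suc k < length (a # seq)"
    show "Rg ((a # seq) ! k) ((a # seq) ! Suc k)"
    proof (cases k)
      case 0 then show ?thesis using step.hyps(1) seq(1,2) by (simp add: hd_conv_nth)
    next
      case (Suc k') then show ?thesis using seq(5) k by simp
    qed
  qed
qed

end

lemma swp_sum: assumes l: "Suc b < length \<rho>"
  shows "sum_list (map (f :: 'a \<Rightarrow> 'b::comm_monoid_add) (swp b \<rho>)) = sum_list (map f \<rho>) "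
proof -
  have e: "\<rho> = take b \<rho> @ \<rho> ! b # \<rho> ! Suc b # drop (Suc (Suc b)) \<rho>" by (rule swp_decomp[OF l])
  have "sum_list (map f \<rho>) = sum_list (map f (take b \<rho> @ \<rho> ! b # \<rho> ! Suc b # drop (Suc (Suc b)) \<rho>))"
    using arg_cong[OF e, of "\<lambda>l. sum_list (map f l)"] .
  moreover have "sum_list (map f (swp b \<rho>)) = sum_list (map f (take b \<rho> @ \<rho> ! Suc b # \<rho> ! b # drop (Suc (Suc b)) \<rho>))"
    by (simp only: swp_eq[OF l])
  ultimately show ?thesis by (simp add: add_ac)
qed

lemma good_swp_orth: assumes l: "Suc b < length \<rho>" and g: "good A wt \<rho>"
  and z: "A (\<rho> ! b) (\<rho> ! Suc b) = 0" "A (\<rho> ! Suc b) (\<rho> ! b) = 0"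
  shows "good A wt (swp b \<rho>)"
proof -
  have e: "\<rho> = take b \<rho> @ \<rho> ! b # \<rho> ! Suc b # drop (Suc (Suc b)) \<rho>" by (rule swp_decomp[OF l])
  have "good A wt (take b \<rho> @ \<rho> ! b # \<rho> ! Suc b # drop (Suc (Suc b)) \<rho>)" using g e by simp
  then have "good A wt (take b \<rho> @ \<rho> ! Suc b # \<rho> ! b # drop (Suc (Suc b)) \<rho>)"
    using good_orth[of A wt "take b \<rho>" "\<rho> ! b" "\<rho> ! Suc b" "drop (Suc (Suc b)) \<rho>"] z by blast
  then show ?thesis using swp_eq[OF l] by simp
qed

lemma rk_nth: "x \<in> set xs \<Longrightarrow> xs ! length (takeWhile (\<lambda>y. y \<noteq> x) xs) = x"
  by (induction xs) auto

theorem proposition5p7: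
  fixes I Iodd :: "'i set"
    and A :: "'i \<Rightarrow> 'i \<Rightarrow> int" and d :: "'i \<Rightarrow> int"
    and \<alpha> :: "'i \<Rightarrow> 'p::ab_group_add" and h :: "'i \<Rightarrow> 'p \<Rightarrow> int"
    and bf :: "'p \<Rightarrow> 'p \<Rightarrow> rat"
    and t :: "'i \<Rightarrow> 'i \<Rightarrow> nat \<Rightarrow> nat \<Rightarrow> 'k::field"
    and \<Lambda> :: 'p and js :: "'i list" and \<mu> \<nu> :: "'i list"
  assumes char: "(2::'k) \<noteq> 0"
    and A_diag: "\<forall>i\<in>I. A i i = 2"
    and A_off: "\<forall>i\<in>I. \<forall>j\<in>I. i \<noteq> j \<longrightarrow> A i j \<le> 0"
    and A_zero: "\<forall>i\<in>I. \<forall>j\<in>I. A i j = 0 \<longleftrightarrow> A j i = 0"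
    and d_pos: "\<forall>i\<in>I. 0 < d i"
    and A_sym: "\<forall>i\<in>I. \<forall>j\<in>I. d i * A i j = d j * A j i"
    and P_free: "\<exists>B::'p set. zfree_basis B"
    and \<alpha>_indep: "zlin_indep I \<alpha>"
    and h_hom: "\<forall>i\<in>I. \<forall>x y. h i (x + y) = h i x + h i y"
    and h_\<alpha>: "\<forall>i\<in>I. \<forall>j\<in>I. h i (\<alpha> j) = A i j"
    and Iodd_sub: "Iodd \<subseteq> I"
    and Iodd_even: "\<forall>i\<in>Iodd. \<forall>j\<in>I. even (A i j)"
    and bf_sym: "\<forall>x y. bf x y = bf y x"
    and bf_add: "\<forall>x y z. bf (x + y) z = bf x z + bf y z"
    and bf_\<alpha>: "\<forall>i\<in>I. \<forall>x. bf (\<alpha> i) x = of_int (d i * h i x)"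
    and t_deg: "\<forall>i\<in>I. \<forall>j\<in>I. \<forall>r s. t i j r s \<noteq> 0 \<longrightarrow>
                  - 2 * bf (\<alpha> i) (\<alpha> j) - of_nat r * bf (\<alpha> i) (\<alpha> i) - of_nat s * bf (\<alpha> j) (\<alpha> j) = 0"
    and t_sym: "\<forall>i\<in>I. \<forall>j\<in>I. \<forall>r s. t i j r s = t j i s r"
    and t_unit: "\<forall>i\<in>I. \<forall>j\<in>I. i \<noteq> j \<longrightarrow> t i j (nat (- A i j)) 0 \<noteq> 0"
    and t_diag: "\<forall>i\<in>I. \<forall>r s. t i i r s = 0"
    and t_odd: "\<forall>i\<in>Iodd. \<forall>j\<in>I. \<forall>r s. odd r \<longrightarrow> t i j r s = 0"
    and \<Lambda>_dom: "\<forall>i\<in>I. 0 \<le> h i \<Lambda>"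
    and js: "set js \<subseteq> I" "distinct js"
    and \<mu>: "\<mu> \<in> Ibeta I \<alpha> (sum_list (map \<alpha> js))"
    and \<nu>: "\<nu> \<in> Ibeta I \<alpha> (sum_list (map \<alpha> js))"
    and \<mu>_nz: "\<not> RL_zero Iodd t h \<Lambda> (Ibeta I \<alpha> (sum_list (map \<alpha> js))) (length js) (idem \<mu>)"
    and \<nu>_nz: "\<not> RL_zero Iodd t h \<Lambda> (Ibeta I \<alpha> (sum_list (map \<alpha> js))) (length js) (idem \<nu>)"
  shows "\<exists>seq. seq \<noteq> [] \<and> hd seq = \<mu> \<and> last seq = \<nu> \<and>
           set seq \<subseteq> Ibeta I \<alpha> (sum_list (map \<alpha> js)) \<and>
           (\<forall>k. Suc k < length seq \<longrightarrow>
              (\<exists>a. fa_elem (Ibeta I \<alpha> (sum_list (map \<alpha> js))) (length js) a \<and>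
                 \<not> RL_zero Iodd t h \<Lambda> (Ibeta I \<alpha> (sum_list (map \<alpha> js))) (length js)
                     (fa_mult (fa_mult (idem (seq ! k)) a) (idem (seq ! Suc k)))))"
proof -
  let ?Ib = "Ibeta I \<alpha> (sum_list (map \<alpha> js))"
  let ?n = "length js"
  let ?J = "in_ideal (fa_elem ?Ib ?n) (relsR Iodd t ?Ib ?n \<union> relsCyc h \<Lambda> ?Ib ?n)"
  have perm: "\<And>\<rho>. \<rho> \<in> ?Ib \<Longrightarrow> distinct \<rho> \<and> set \<rho> = set js \<and> length \<rho> = length js"
    using Ibeta_perm[OF \<alpha>_indep js] by blast
  have finIb: "finite ?Ib" using Ibeta_finite[OF \<alpha>_indep js] .
  have IbI: "\<And>\<rho>. \<rho> \<in> ?Ib \<Longrightarrow> set \<rho> \<subseteq> I" by (simp add: Ibeta_def)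
  show ?thesis
  proof (cases "js = []")
    case True
    then have "\<mu> = []" "\<nu> = []" using perm[OF \<mu>] perm[OF \<nu>] by auto
    then show ?thesis using \<mu> by (intro exI[of _ "[\<mu>]"]) auto
  next
    case False
    then have n0: "0 < ?n" by simp
    have Ib_swp: "\<And>\<rho> b. \<rho> \<in> ?Ib \<Longrightarrow> Suc b < length \<rho> \<Longrightarrow> swp b \<rho> \<in> ?Ib"
    proof -
      fix \<rho> b assume r: "\<rho> \<in> ?Ib" and l: "Suc b < length \<rho>"
      show "swp b \<rho> \<in> ?Ib" using r swp_set[OF l] swp_sum[OF l, of \<alpha>] by (simp add: Ibeta_def)
    qed
    have dpos: "\<And>x. x \<in> I \<Longrightarrow> 0 < d x" using d_pos by blast
    have bfA: "\<And>x y. x \<in> I \<Longrightarrow> y \<in> I \<Longrightarrow> bf (\<alpha> x) (\<alpha> y) = of_int (d x * A x y)"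
      using bf_\<alpha> h_\<alpha> by simp
    have t_orthrs: "\<And>x y r s. x \<in> I \<Longrightarrow> y \<in> I \<Longrightarrow> A x y = 0 \<Longrightarrow> t x y r s \<noteq> 0 \<Longrightarrow> r = 0 \<and> s = 0"
    proof -
      fix x y r s assume x: "x \<in> I" and y: "y \<in> I" and z: "A x y = 0" and nz: "t x y r s \<noteq> 0"
      have xy: "x \<noteq> y" using nz t_diag x by auto
      have e: "- 2 * bf (\<alpha> x) (\<alpha> y) - of_nat r * bf (\<alpha> x) (\<alpha> x) - of_nat s * bf (\<alpha> y) (\<alpha> y) = 0"
        using t_deg x y nz by blast
      have e2: "of_int (int r * (2 * d x) + int s * (2 * d y)) = (0::rat)"
        using e bfA[OF x y] bfA[OF x x] bfA[OF y y] z A_diag x y by (simp add: algebra_simps)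
      then have e3: "int r * (2 * d x) + int s * (2 * d y) = 0" by linarith
      have "0 \<le> int r * (2 * d x)" "0 \<le> int s * (2 * d y)" using dpos[OF x] dpos[OF y] by simp_all
      then have "int r * (2 * d x) = 0" "int s * (2 * d y) = 0" using e3 by linarith+
      then show "r = 0 \<and> s = 0" using dpos[OF x] dpos[OF y] by simp
    qed
    have t_north: "\<And>x y. x \<in> I \<Longrightarrow> y \<in> I \<Longrightarrow> A x y \<noteq> 0 \<Longrightarrow> t x y 0 0 = 0"
    proof (rule ccontr)
      fix x y assume x: "x \<in> I" and y: "y \<in> I" and nz: "A x y \<noteq> 0" and tn: "t x y 0 0 \<noteq> 0"
      have e: "- 2 * bf (\<alpha> x) (\<alpha> y) - of_nat 0 * bf (\<alpha> x) (\<alpha> x) - of_nat 0 * bf (\<alpha> y) (\<alpha> y) = 0"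
        using t_deg x y tn by blast
      then have "d x * A x y = 0" using bfA[OF x y] by simp
      then show False using dpos[OF x] nz by simp
    qed
    have t_orth0: "\<And>x y. x \<in> I \<Longrightarrow> y \<in> I \<Longrightarrow> x \<noteq> y \<Longrightarrow> A x y = 0 \<Longrightarrow> t x y 0 0 \<noteq> 0"
      using t_unit by fastforce
    interpret C: cycl I Iodd A t h \<Lambda> ?Ib ?n
    proof
      show "finite ?Ib" by (rule finIb)
      show "\<And>\<rho>. \<rho> \<in> ?Ib \<Longrightarrow> length \<rho> = ?n" using perm by blast
      show "\<And>\<rho>. \<rho> \<in> ?Ib \<Longrightarrow> set \<rho> \<subseteq> I" by (rule IbI)
      show "\<And>\<rho> b. \<rho> \<in> ?Ib \<Longrightarrow> Suc b < length \<rho> \<Longrightarrow> swp b \<rho> \<in> ?Ib" by (rule Ib_swp)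
      show "\<And>x y. x \<in> I \<Longrightarrow> y \<in> I \<Longrightarrow> x \<noteq> y \<Longrightarrow> A x y = 0 \<Longrightarrow> t x y 0 0 \<noteq> 0" by (rule t_orth0)
      show "\<And>x y r s. x \<in> I \<Longrightarrow> y \<in> I \<Longrightarrow> A x y = 0 \<Longrightarrow> t x y r s \<noteq> 0 \<Longrightarrow> r = 0 \<and> s = 0" by (rule t_orthrs)
      show "\<And>\<rho>. \<rho> \<in> ?Ib \<Longrightarrow> distinct \<rho>" using perm by blast
      show "\<And>x y. x \<in> I \<Longrightarrow> y \<in> I \<Longrightarrow> x \<noteq> y \<Longrightarrow> A x y \<le> 0" using A_off by blast
      show "\<And>x y. x \<in> I \<Longrightarrow> y \<in> I \<Longrightarrow> (A x y = 0) = (A y x = 0)" using A_zero by blast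
      show "\<And>x. x \<in> I \<Longrightarrow> 0 \<le> h x \<Lambda>" using \<Lambda>_dom by blast
    qed
    have gm: "good A (\<lambda>z. h z \<Lambda>) \<mu>"
    proof (rule ccontr)
      assume "\<not> good A (\<lambda>z. h z \<Lambda>) \<mu>"
      then have "?J (idem \<mu>)" using C.bad_zero[OF n0 \<mu>] by simp
      then show False using \<mu>_nz by (simp add: RL_zero_def)
    qed
    have gn: "good A (\<lambda>z. h z \<Lambda>) \<nu>"
    proof (rule ccontr)
      assume "\<not> good A (\<lambda>z. h z \<Lambda>) \<nu>"
      then have "?J (idem \<nu>)" using C.bad_zero[OF n0 \<nu>] by simp
      then show False using \<nu>_nz by (simp add: RL_zero_def)
    qed
    have "C.Rg\<^sup>*\<^sup>* ([] @ \<mu>) ([] @ \<nu>)"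
      by (rule C.chain) (use \<mu> \<nu> gm gn perm[OF \<mu>] perm[OF \<nu>] in simp_all)
    then obtain seq where seq: "seq \<noteq> []" "hd seq = \<mu>" "last seq = \<nu>"
      "\<forall>\<rho>\<in>set seq. \<rho> \<in> ?Ib \<and> good A (\<lambda>z. h z \<Lambda>) \<rho>"
      "\<forall>k. Suc k < length seq \<longrightarrow> C.Rg (seq ! k) (seq ! Suc k)"
      using C.chain_list[of \<mu> \<nu>] \<mu> gm by auto
    define S where "S = {\<rho> \<in> ?Ib. good A (\<lambda>z. h z \<Lambda>) \<rho>}"
    define rk where "rk x = length (takeWhile (\<lambda>y. y \<noteq> x) js)" for x
    have M: "modl S ?Ib ?n I A t rk h \<Lambda>"
    proof
      show "finite ?Ib" by (rule finIb)
      show "S \<subseteq> ?Ib" by (auto simp: S_def)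
      show "\<And>\<rho>. \<rho> \<in> S \<Longrightarrow> length \<rho> = ?n" using perm by (auto simp: S_def)
      show "\<And>\<rho>. \<rho> \<in> S \<Longrightarrow> distinct \<rho>" using perm by (auto simp: S_def)
      show "\<And>\<rho>. \<rho> \<in> S \<Longrightarrow> set \<rho> \<subseteq> I" using IbI by (auto simp: S_def)
      show "\<And>\<rho> b. \<rho> \<in> S \<Longrightarrow> Suc b < ?n \<Longrightarrow> A (\<rho> ! b) (\<rho> ! Suc b) = 0 \<Longrightarrow> swp b \<rho> \<in> S"
      proof -
        fix \<rho> b assume r: "\<rho> \<in> S" and b: "Suc b < ?n" and z: "A (\<rho> ! b) (\<rho> ! Suc b) = 0"
        have rI: "\<rho> \<in> ?Ib" and g: "good A (\<lambda>z. h z \<Lambda>) \<rho>" using r by (auto simp: S_def)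
        have l: "Suc b < length \<rho>" using perm[OF rI] b by simp
        have I2: "\<rho> ! b \<in> I" "\<rho> ! Suc b \<in> I" using IbI[OF rI] l nth_mem[of b \<rho>] nth_mem[OF l] by auto
        have z2: "A (\<rho> ! Suc b) (\<rho> ! b) = 0" using z A_zero I2 by blast
        show "swp b \<rho> \<in> S" using Ib_swp[OF rI l] good_swp_orth[OF l g z z2] by (simp add: S_def)
      qed
      show "\<And>x y. x \<in> I \<Longrightarrow> y \<in> I \<Longrightarrow> (A x y = 0) = (A y x = 0)" using A_zero by blast
      show "\<And>x y. x \<in> I \<Longrightarrow> y \<in> I \<Longrightarrow> t x y 0 0 = t y x 0 0" using t_sym by blast
      show "\<And>x y. x \<in> I \<Longrightarrow> y \<in> I \<Longrightarrow> x \<noteq> y \<Longrightarrow> A x y = 0 \<Longrightarrow> t x y 0 0 \<noteq> 0" by (rule t_orth0)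
      show "\<And>x y. x \<in> I \<Longrightarrow> y \<in> I \<Longrightarrow> A x y \<noteq> 0 \<Longrightarrow> t x y 0 0 = 0" by (rule t_north)
      show "\<And>\<rho>. \<rho> \<in> S \<Longrightarrow> inj_on rk (set \<rho>)"
      proof -
        fix \<rho> assume r: "\<rho> \<in> S"
        have "set \<rho> = set js" using perm r by (auto simp: S_def)
        then show "inj_on rk (set \<rho>)" unfolding inj_on_def rk_def by (metis rk_nth)
      qed
      show "\<And>\<rho>. \<rho> \<in> S \<Longrightarrow> 0 < ?n \<Longrightarrow> 0 < h (\<rho> ! 0) \<Lambda>"
      proof -
        fix \<rho> assume r: "\<rho> \<in> S" and n: "0 < ?n"
        have "length \<rho> = ?n" using perm r by (auto simp: S_def)
        then obtain x xs where "\<rho> = x # xs" using n by (cases \<rho>) auto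
        then show "0 < h (\<rho> ! 0) \<Lambda>" using r by (auto simp: S_def)
      qed
    qed
    show ?thesis
    proof (intro exI[of _ seq] conjI allI impI)
      show "seq \<noteq> []" "hd seq = \<mu>" "last seq = \<nu>" using seq by auto
      show "set seq \<subseteq> ?Ib" using seq(4) by auto
      fix k assume k: "Suc k < length seq"
      have R: "C.Rg (seq ! k) (seq ! Suc k)" using seq(5) k by simp
      let ?\<sigma> = "seq ! Suc k"
      obtain bb where bb: "Suc bb < length ?\<sigma>" "seq ! k = swp bb ?\<sigma>" using R by (auto simp: C.Rg_def)
      have s1: "?\<sigma> \<in> S" and s2: "swp bb ?\<sigma> \<in> S" using R bb by (auto simp: C.Rg_def S_def)
      have bn: "Suc bb < ?n" using bb perm s1 by (auto simp: S_def)
      have nz: "\<not> ?J (fa_mult (fa_mult (idem (swp bb ?\<sigma>)) (ind [GT bb])) (idem ?\<sigma>))"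
        by (rule modl.nonzero_step[OF M s1 s2 bn, where X="?\<sigma> ! bb" and Y="?\<sigma> ! Suc bb"]) (simp add: allowed_def)
      have fe: "fa_elem ?Ib ?n (ind [GT bb])" by (rule fa_elem_ind) (use bn in \<open>simp add: valid_gen_def\<close>)
      show "\<exists>a. fa_elem ?Ib ?n a \<and> \<not> RL_zero Iodd t h \<Lambda> ?Ib ?n (fa_mult (fa_mult (idem (seq ! k)) a) (idem (seq ! Suc k)))"
        using fe nz bb(2) by (auto simp: RL_zero_def)
    qed
  qed
qed

end
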